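(* Every eaco $(\mathcal{C},P)$ is a restricted $\Sigma(\mathcal{C}_P^o)$-doctrine.
   Context: A doctrine is a pair $(\mathcal{C},P)$, $\mathcal{C}$ a category with finite products, $P:\mathcal{C}^{op}\to\mathbf{Pos}$ a functor, $f^*=P(f)$; primary: each $P(A)$ has binary meets preserved by each $f^*$. Elementary: primary and for every $A$ there is $\delta_A\in P(A\times A)$ such that for every $X$ the assignment $\psi\mapsto\langle\pi_1,\pi_2\rangle^*\psi\wedge\langle\pi_2,\pi_3\rangle^*\delta_A$ ($\pi_i$ the projections of $X\times A\times A$) is a left adjoint $P(X\times A)\to P(X\times A\times A)$ to $(id_X\times\Delta_A)^*$. Graph of $f:X\to A$: $\mathcal{G}(f)=(f\times id_A)^*\delta_A\in P(X\times A)$. Stable initial object: initial $0$ with $X\times0\cong0$ for all $X$. AC: for every $A$ not a stable initial object and every $\Gamma$, $\pi_\Gamma^*$ ($\pi_\Gamma:\Gamma\times A\to\Gamma$) has a left adjoint $\Sigma_{\pi_\Gamma}$ and for every $\psi\in P(\Gamma\times A)$ there is a chosen $\epsilon_\psi:\Gamma\to A$ with $\Sigma_{\pi_\Gamma}\psi=\langle id_\Gamma,\epsilon_\psi\rangle^*\psi$ (also used with factors swapped). Co-comprehension: every $P(A)$ has a bottom and for each $\alpha$ there is $\lceil\alpha\rceil:\{\alpha\}^o\to A$ with $\lceil\alpha\rceil^*\alpha=\bot$, universal (unique factorization) among $f$ with $f^*\alpha=\bot$; full if $\lceil\beta\rceil$ factoring through $\lceil\alpha\rceil$ implies $\alpha\le\beta$.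 $\mathcal{C}_P^o$ is the pullback-stable class of arrows of the form $\lceil\alpha\rceil$ (the pullback of $\lceil\alpha\rceil$ along $f$ is $\lceil f^*\alpha\rceil$). An eaco is an elementary doctrine with full co-comprehension satisfying AC such that for every $f:X\to A$ and $\alpha\in P(A)$: $f^*\langle\epsilon_{\mathcal{G}(\lceil\alpha\rceil)},id_A\rangle^*\mathcal{G}(\lceil\alpha\rceil)=\langle\epsilon_{\mathcal{G}(\lceil f^*\alpha\rceil)},id_X\rangle^*\mathcal{G}(\lceil f^*\alpha\rceil)$ (with $\epsilon_{\mathcal{G}(\lceil\alpha\rceil)}:A\to\{\alpha\}^o$ the AC witness for the projection $\{\alpha\}^o\times A\to A$). A restricted $\Sigma(\mathcal{A})$-doctrine (for a pullback-stable class $\mathcal{A}$): for every $f:A\to B$ in $\mathcal{A}$, $f^*$ has a left adjoint $\Sigma_f$ and for every pullback square $h\circ g=f\circ k$ and $\xi\in P(B)$, $h^*\Sigma_ff^*\xi=\Sigma_gk^*f^*\xi$. *)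

theory Defs
  imports Main
begin

text \<open>A category with chosen finite products (terminal object, binary products
with chosen projections and pairing).  Objects have type 'o, arrows type 'm.
Composition: Cmp C g f is g after f.\<close>

record ('o,'m) cat =
  Ob   :: "'o set"
  Ar   :: "'m set"
  Dm   :: "'m \<Rightarrow> 'o"
  Cd   :: "'m \<Rightarrow> 'o"
  Cmp  :: "'m \<Rightarrow> 'm \<Rightarrow> 'm"
  Idt  :: "'o \<Rightarrow> 'm"
  Prd  :: "'o \<Rightarrow> 'o \<Rightarrow> 'o"
  Pr1  :: "'o \<Rightarrow> 'o \<Rightarrow> 'm"
  Pr2  :: "'o \<Rightarrow> 'o \<Rightarrow> 'm"
  Pair :: "'m \<Rightarrow> 'm \<Rightarrow> 'm"
  Trm  :: "'o"

definition hom :: "('o,'m) cat \<Rightarrow> 'o \<Rightarrow> 'o \<Rightarrow> 'm set" where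
  "hom C A B = {f \<in> Ar C. Dm C f = A \<and> Cd C f = B}"

definition category :: "('o,'m) cat \<Rightarrow> bool" where
  "category C \<longleftrightarrow>
     (\<forall>f\<in>Ar C. Dm C f \<in> Ob C \<and> Cd C f \<in> Ob C) \<and>
     (\<forall>A\<in>Ob C. Idt C A \<in> hom C A A) \<and>
     (\<forall>A B E f g. f \<in> hom C A B \<longrightarrow> g \<in> hom C B E \<longrightarrow> Cmp C g f \<in> hom C A E) \<and>
     (\<forall>A B E F f g h. f \<in> hom C A B \<longrightarrow> g \<in> hom C B E \<longrightarrow> h \<in> hom C E F \<longrightarrow>
        Cmp C h (Cmp C g f) = Cmp C (Cmp C h g) f) \<and>
     (\<forall>A B f. f \<in> hom C A B \<longrightarrow> Cmp C (Idt C B) f = f \<and> Cmp C f (Idt C A) = f)"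

definition finite_products :: "('o,'m) cat \<Rightarrow> bool" where
  "finite_products C \<longleftrightarrow> category C \<and>
     Trm C \<in> Ob C \<and> (\<forall>A\<in>Ob C. \<exists>!t. t \<in> hom C A (Trm C)) \<and>
     (\<forall>A\<in>Ob C. \<forall>B\<in>Ob C.
        Prd C A B \<in> Ob C \<and> Pr1 C A B \<in> hom C (Prd C A B) A \<and> Pr2 C A B \<in> hom C (Prd C A B) B \<and>
        (\<forall>Z f g. f \<in> hom C Z A \<longrightarrow> g \<in> hom C Z B \<longrightarrow>
            Pair C f g \<in> hom C Z (Prd C A B) \<and>
            Cmp C (Pr1 C A B) (Pair C f g) = f \<and> Cmp C (Pr2 C A B) (Pair C f g) = g) \<and>
        (\<forall>Z h. h \<in> hom C Z (Prd C A B) \<longrightarrow>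
            h = Pair C (Cmp C (Pr1 C A B) h) (Cmp C (Pr2 C A B) h)))"

text \<open>A functor P : C^op \<rightarrow> Pos: P(A) = Pd D A ordered by Le D A, reindexing f^* = Re D f.\<close>

record ('o,'m,'p) doct =
  Pd :: "'o \<Rightarrow> 'p set"
  Le :: "'o \<Rightarrow> 'p \<Rightarrow> 'p \<Rightarrow> bool"
  Re :: "'m \<Rightarrow> 'p \<Rightarrow> 'p"

definition doctrine :: "('o,'m) cat \<Rightarrow> ('o,'m,'p) doct \<Rightarrow> bool" where
  "doctrine C D \<longleftrightarrow> finite_products C \<and>
     (\<forall>A\<in>Ob C. (\<forall>a\<in>Pd D A. Le D A a a) \<and>
        (\<forall>a\<in>Pd D A. \<forall>b\<in>Pd D A. Le D A a b \<longrightarrow> Le D A b a \<longrightarrow> a = b) \<and>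
        (\<forall>a\<in>Pd D A. \<forall>b\<in>Pd D A. \<forall>c\<in>Pd D A. Le D A a b \<longrightarrow> Le D A b c \<longrightarrow> Le D A a c)) \<and>
     (\<forall>A B f. f \<in> hom C A B \<longrightarrow>
        (\<forall>b\<in>Pd D B. Re D f b \<in> Pd D A) \<and>
        (\<forall>b\<in>Pd D B. \<forall>c\<in>Pd D B. Le D B b c \<longrightarrow> Le D A (Re D f b) (Re D f c))) \<and>
     (\<forall>A\<in>Ob C. \<forall>a\<in>Pd D A. Re D (Idt C A) a = a) \<and>
     (\<forall>A B E f g. f \<in> hom C A B \<longrightarrow> g \<in> hom C B E \<longrightarrow>
        (\<forall>c\<in>Pd D E. Re D (Cmp C g f) c = Re D f (Re D g c)))"

definition primary :: "('o,'m) cat \<Rightarrow> ('o,'m,'p) doct \<Rightarrow> ('o \<Rightarrow> 'p \<Rightarrow> 'p \<Rightarrow> 'p) \<Rightarrow> bool" where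
  "primary C D Meet \<longleftrightarrow> doctrine C D \<and>
     (\<forall>A\<in>Ob C. \<forall>a\<in>Pd D A. \<forall>b\<in>Pd D A.
        Meet A a b \<in> Pd D A \<and> Le D A (Meet A a b) a \<and> Le D A (Meet A a b) b \<and>
        (\<forall>c\<in>Pd D A. Le D A c a \<longrightarrow> Le D A c b \<longrightarrow> Le D A c (Meet A a b))) \<and>
     (\<forall>A B f. f \<in> hom C A B \<longrightarrow>
        (\<forall>a\<in>Pd D B. \<forall>b\<in>Pd D B. Re D f (Meet B a b) = Meet A (Re D f a) (Re D f b)))"

text \<open>X \<times> A \<times> A is read as (X \<times> A) \<times> A with projections \<pi>1, \<pi>2, \<pi>3.\<close>

definition elementary :: "('o,'m) cat \<Rightarrow> ('o,'m,'p) doct \<Rightarrow> ('o \<Rightarrow> 'p \<Rightarrow> 'p \<Rightarrow> 'p)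
    \<Rightarrow> ('o \<Rightarrow> 'p) \<Rightarrow> bool" where
  "elementary C D Meet Delta \<longleftrightarrow> primary C D Meet \<and>
     (\<forall>A\<in>Ob C. Delta A \<in> Pd D (Prd C A A) \<and>
       (\<forall>X\<in>Ob C.
         (let XA = Prd C X A; T = Prd C XA A;
              p1 = Cmp C (Pr1 C X A) (Pr1 C XA A);
              p2 = Cmp C (Pr2 C X A) (Pr1 C XA A);
              p3 = Pr2 C XA A;
              idD = Pair C (Idt C XA) (Pr2 C X A)
          in \<forall>\<psi>\<in>Pd D XA. \<forall>\<phi>\<in>Pd D T.
               Le D T (Meet T (Re D (Pair C p1 p2) \<psi>) (Re D (Pair C p2 p3) (Delta A))) \<phi>
               \<longleftrightarrow> Le D XA \<psi> (Re D idD \<phi>))))"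

definition graph :: "('o,'m) cat \<Rightarrow> ('o,'m,'p) doct \<Rightarrow> ('o \<Rightarrow> 'p) \<Rightarrow> 'm \<Rightarrow> 'p" where
  "graph C D Delta f =
     (let X = Dm C f; A = Cd C f
      in Re D (Pair C (Cmp C f (Pr1 C X A)) (Pr2 C X A)) (Delta A))"

definition iso :: "('o,'m) cat \<Rightarrow> 'm \<Rightarrow> bool" where
  "iso C f \<longleftrightarrow> f \<in> Ar C \<and> (\<exists>g. g \<in> hom C (Cd C f) (Dm C f) \<and>
      Cmp C g f = Idt C (Dm C f) \<and> Cmp C f g = Idt C (Cd C f))"

definition initial :: "('o,'m) cat \<Rightarrow> 'o \<Rightarrow> bool" where
  "initial C Z \<longleftrightarrow> Z \<in> Ob C \<and> (\<forall>A\<in>Ob C. \<exists>!f. f \<in> hom C Z A)"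

definition stable_initial :: "('o,'m) cat \<Rightarrow> 'o \<Rightarrow> bool" where
  "stable_initial C Z \<longleftrightarrow> initial C Z \<and> (\<forall>X\<in>Ob C. \<exists>f\<in>hom C (Prd C X Z) Z. iso C f)"

text \<open>AC with chosen witnesses: EpsC \<Gamma> A \<psi> for the projection \<Gamma>\<times>A \<rightarrow> \<Gamma>,
  EpsW \<Gamma> A \<psi> for the projection A\<times>\<Gamma> \<rightarrow> \<Gamma> (factors swapped).  The condition says that
  \<psi> \<mapsto> <id,\<epsilon>_\<psi>>^* \<psi> is a left adjoint of the projection's reindexing.\<close>

definition AC :: "('o,'m) cat \<Rightarrow> ('o,'m,'p) doct \<Rightarrow> ('o \<Rightarrow> 'o \<Rightarrow> 'p \<Rightarrow> 'm)
    \<Rightarrow> ('o \<Rightarrow> 'o \<Rightarrow> 'p \<Rightarrow> 'm) \<Rightarrow> bool" where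
  "AC C D EpsC EpsW \<longleftrightarrow>
     (\<forall>A\<in>Ob C. \<not> stable_initial C A \<longrightarrow> (\<forall>G\<in>Ob C.
        (\<forall>\<psi>\<in>Pd D (Prd C G A). EpsC G A \<psi> \<in> hom C G A \<and>
           (\<forall>\<xi>\<in>Pd D G. Le D G (Re D (Pair C (Idt C G) (EpsC G A \<psi>)) \<psi>) \<xi>
                         \<longleftrightarrow> Le D (Prd C G A) \<psi> (Re D (Pr1 C G A) \<xi>))) \<and>
        (\<forall>\<psi>\<in>Pd D (Prd C A G). EpsW G A \<psi> \<in> hom C G A \<and>
           (\<forall>\<xi>\<in>Pd D G. Le D G (Re D (Pair C (EpsW G A \<psi>) (Idt C G)) \<psi>) \<xi>
                         \<longleftrightarrow> Le D (Prd C A G) \<psi> (Re D (Pr2 C A G) \<xi>)))))"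

text \<open>Co-comprehension: CoObj A \<alpha> = {\<alpha>}^o, CoArr A \<alpha> = \<lceil>\<alpha>\<rceil>.\<close>

definition cocomprehension :: "('o,'m) cat \<Rightarrow> ('o,'m,'p) doct \<Rightarrow> ('o \<Rightarrow> 'p)
    \<Rightarrow> ('o \<Rightarrow> 'p \<Rightarrow> 'o) \<Rightarrow> ('o \<Rightarrow> 'p \<Rightarrow> 'm) \<Rightarrow> bool" where
  "cocomprehension C D Bot CoObj CoArr \<longleftrightarrow>
     (\<forall>A\<in>Ob C. Bot A \<in> Pd D A \<and> (\<forall>a\<in>Pd D A. Le D A (Bot A) a)) \<and>
     (\<forall>A\<in>Ob C. \<forall>a\<in>Pd D A.
        CoObj A a \<in> Ob C \<and> CoArr A a \<in> hom C (CoObj A a) A \<and>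
        Re D (CoArr A a) a = Bot (CoObj A a) \<and>
        (\<forall>Y f. f \<in> hom C Y A \<longrightarrow> Re D f a = Bot Y \<longrightarrow>
           (\<exists>!g. g \<in> hom C Y (CoObj A a) \<and> Cmp C (CoArr A a) g = f)))"

definition full_cocomprehension :: "('o,'m) cat \<Rightarrow> ('o,'m,'p) doct \<Rightarrow> ('o \<Rightarrow> 'p)
    \<Rightarrow> ('o \<Rightarrow> 'p \<Rightarrow> 'o) \<Rightarrow> ('o \<Rightarrow> 'p \<Rightarrow> 'm) \<Rightarrow> bool" where
  "full_cocomprehension C D Bot CoObj CoArr \<longleftrightarrow> cocomprehension C D Bot CoObj CoArr \<and>
     (\<forall>A\<in>Ob C. \<forall>a\<in>Pd D A. \<forall>b\<in>Pd D A.
        (\<exists>g. g \<in> hom C (CoObj A b) (CoObj A a) \<and> Cmp C (CoArr A a) g = CoArr A b)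
        \<longrightarrow> Le D A a b)"

definition eaco :: "('o,'m) cat \<Rightarrow> ('o,'m,'p) doct \<Rightarrow> ('o \<Rightarrow> 'p \<Rightarrow> 'p \<Rightarrow> 'p) \<Rightarrow> ('o \<Rightarrow> 'p)
    \<Rightarrow> ('o \<Rightarrow> 'o \<Rightarrow> 'p \<Rightarrow> 'm) \<Rightarrow> ('o \<Rightarrow> 'o \<Rightarrow> 'p \<Rightarrow> 'm)
    \<Rightarrow> ('o \<Rightarrow> 'p) \<Rightarrow> ('o \<Rightarrow> 'p \<Rightarrow> 'o) \<Rightarrow> ('o \<Rightarrow> 'p \<Rightarrow> 'm) \<Rightarrow> bool" where
  "eaco C D Meet Delta EpsC EpsW Bot CoObj CoArr \<longleftrightarrow>
     elementary C D Meet Delta \<and> full_cocomprehension C D Bot CoObj CoArr \<and>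
     AC C D EpsC EpsW \<and>
     (\<forall>X A f a. f \<in> hom C X A \<longrightarrow> a \<in> Pd D A \<longrightarrow>
        \<not> stable_initial C (CoObj A a) \<longrightarrow> \<not> stable_initial C (CoObj X (Re D f a)) \<longrightarrow>
        (let G = graph C D Delta (CoArr A a);
             b = Re D f a;
             G' = graph C D Delta (CoArr X b)
         in Re D f (Re D (Pair C (EpsW A (CoObj A a) G) (Idt C A)) G)
            = Re D (Pair C (EpsW X (CoObj X b) G') (Idt C X)) G'))"

definition coco_class :: "('o,'m) cat \<Rightarrow> ('o,'m,'p) doct \<Rightarrow> ('o \<Rightarrow> 'p \<Rightarrow> 'm) \<Rightarrow> 'm set" where
  "coco_class C D CoArr = {h. \<exists>A\<in>Ob C. \<exists>a\<in>Pd D A. h = CoArr A a}"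

definition pullback :: "('o,'m) cat \<Rightarrow> 'm \<Rightarrow> 'm \<Rightarrow> 'm \<Rightarrow> 'm \<Rightarrow> bool" where
  "pullback C h g f k \<longleftrightarrow>
     (\<exists>A B E F. f \<in> hom C A B \<and> h \<in> hom C E B \<and> g \<in> hom C F E \<and> k \<in> hom C F A \<and>
        Cmp C h g = Cmp C f k \<and>
        (\<forall>Z u v. u \<in> hom C Z E \<longrightarrow> v \<in> hom C Z A \<longrightarrow> Cmp C h u = Cmp C f v \<longrightarrow>
           (\<exists>!w. w \<in> hom C Z F \<and> Cmp C g w = u \<and> Cmp C k w = v)))"

text \<open>Restricted Sigma(\<A>)-doctrine.  The equation h^* \<Sigma>_f f^* \<xi> = \<Sigma>_g k^* f^* \<xi> is stated as:
  h^* \<Sigma>_f f^* \<xi> is the value at k^* f^* \<xi> of a left adjoint of g^*.\<close>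

definition restricted_Sigma_doctrine :: "('o,'m) cat \<Rightarrow> ('o,'m,'p) doct \<Rightarrow> 'm set \<Rightarrow> bool" where
  "restricted_Sigma_doctrine C D \<A> \<longleftrightarrow> doctrine C D \<and>
     (\<forall>f\<in>\<A>. \<forall>A B. f \<in> hom C A B \<longrightarrow>
       (\<exists>S. (\<forall>\<phi>\<in>Pd D A. S \<phi> \<in> Pd D B \<and>
               (\<forall>\<xi>\<in>Pd D B. Le D B (S \<phi>) \<xi> \<longleftrightarrow> Le D A \<phi> (Re D f \<xi>))) \<and>
            (\<forall>h g k E F. h \<in> hom C E B \<longrightarrow> g \<in> hom C F E \<longrightarrow> k \<in> hom C F A \<longrightarrow>
               pullback C h g f k \<longrightarrow>
               (\<forall>\<xi>\<in>Pd D B. \<forall>\<zeta>\<in>Pd D E.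
                  Le D E (Re D h (S (Re D f \<xi>))) \<zeta> \<longleftrightarrow> Le D F (Re D k (Re D f \<xi>)) (Re D g \<zeta>)))))"

end

theory Submission
  imports Defs
begin

locale EL =
  fixes C :: "('o,'m) cat" and D :: "('o,'m,'p) doct"
    and Meet Delta EpsC EpsW Bot CoObj CoArr
  assumes EA: "eaco C D Meet Delta EpsC EpsW Bot CoObj CoArr"
begin

lemma elem: "elementary C D Meet Delta" using EA unfolding eaco_def by (rule conjunct1)
lemma fcoco: "full_cocomprehension C D Bot CoObj CoArr" using EA unfolding eaco_def by (elim conjE)
lemma ac: "AC C D EpsC EpsW" using EA unfolding eaco_def by (elim conjE)
lemma prim: "primary C D Meet" using elem unfolding elementary_def by (rule conjunct1)
lemma doc: "doctrine C D" using prim unfolding primary_def by (rule conjunct1)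
lemma fp: "finite_products C" using doc unfolding doctrine_def by (rule conjunct1)
lemma cat: "category C" using fp unfolding finite_products_def by (rule conjunct1)
lemma coco: "cocomprehension C D Bot CoObj CoArr" using fcoco unfolding full_cocomprehension_def by (rule conjunct1)

lemma homI: "f \<in> Ar C \<Longrightarrow> Dm C f = A \<Longrightarrow> Cd C f = B \<Longrightarrow> f \<in> hom C A B"
  by (simp add: hom_def)
lemma homD: "f \<in> hom C A B \<Longrightarrow> f \<in> Ar C \<and> Dm C f = A \<and> Cd C f = B"
  by (simp add: hom_def)

lemma dom_ob: "f \<in> hom C A B \<Longrightarrow> A \<in> Ob C"
  using cat unfolding category_def hom_def by blast
lemma cod_ob: "f \<in> hom C A B \<Longrightarrow> B \<in> Ob C"
  using cat unfolding category_def hom_def by blast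

lemma id_hom[intro]: "A \<in> Ob C \<Longrightarrow> Idt C A \<in> hom C A A"
  using cat unfolding category_def by blast
lemma comp_hom[intro]: "f \<in> hom C A B \<Longrightarrow> g \<in> hom C B E \<Longrightarrow> Cmp C g f \<in> hom C A E"
  using cat unfolding category_def by blast
lemma assoc: "f \<in> hom C A B \<Longrightarrow> g \<in> hom C B E \<Longrightarrow> h \<in> hom C E F \<Longrightarrow>
        Cmp C h (Cmp C g f) = Cmp C (Cmp C h g) f"
  using cat unfolding category_def by blast
lemma id_l: "f \<in> hom C A B \<Longrightarrow> Cmp C (Idt C B) f = f"
  using cat unfolding category_def by blast
lemma id_r: "f \<in> hom C A B \<Longrightarrow> Cmp C f (Idt C A) = f"
  using cat unfolding category_def by blast

lemma fpAB: assumes "A \<in> Ob C" "B \<in> Ob C"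
  shows "Prd C A B \<in> Ob C \<and> Pr1 C A B \<in> hom C (Prd C A B) A \<and> Pr2 C A B \<in> hom C (Prd C A B) B \<and>
        (\<forall>Z f g. f \<in> hom C Z A \<longrightarrow> g \<in> hom C Z B \<longrightarrow>
            Pair C f g \<in> hom C Z (Prd C A B) \<and>
            Cmp C (Pr1 C A B) (Pair C f g) = f \<and> Cmp C (Pr2 C A B) (Pair C f g) = g) \<and>
        (\<forall>Z h. h \<in> hom C Z (Prd C A B) \<longrightarrow>
            h = Pair C (Cmp C (Pr1 C A B) h) (Cmp C (Pr2 C A B) h))"
proof -
  have "\<forall>A\<in>Ob C. \<forall>B\<in>Ob C.
        Prd C A B \<in> Ob C \<and> Pr1 C A B \<in> hom C (Prd C A B) A \<and> Pr2 C A B \<in> hom C (Prd C A B) B \<and>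
        (\<forall>Z f g. f \<in> hom C Z A \<longrightarrow> g \<in> hom C Z B \<longrightarrow>
            Pair C f g \<in> hom C Z (Prd C A B) \<and>
            Cmp C (Pr1 C A B) (Pair C f g) = f \<and> Cmp C (Pr2 C A B) (Pair C f g) = g) \<and>
        (\<forall>Z h. h \<in> hom C Z (Prd C A B) \<longrightarrow>
            h = Pair C (Cmp C (Pr1 C A B) h) (Cmp C (Pr2 C A B) h))"
    using fp unfolding finite_products_def by (elim conjE)
  thus ?thesis using assms by (elim ballE) auto
qed

lemma prd_ob[intro]: "A \<in> Ob C \<Longrightarrow> B \<in> Ob C \<Longrightarrow> Prd C A B \<in> Ob C"
  by (rule fpAB[THEN conjunct1])
lemma pr1_hom[intro]: "A \<in> Ob C \<Longrightarrow> B \<in> Ob C \<Longrightarrow> Pr1 C A B \<in> hom C (Prd C A B) A"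
  by (rule fpAB[THEN conjunct2, THEN conjunct1])
lemma pr2_hom[intro]: "A \<in> Ob C \<Longrightarrow> B \<in> Ob C \<Longrightarrow> Pr2 C A B \<in> hom C (Prd C A B) B"
  by (rule fpAB[THEN conjunct2, THEN conjunct2, THEN conjunct1])
lemma fp_pair: assumes "f \<in> hom C Z A" "g \<in> hom C Z B"
  shows "Pair C f g \<in> hom C Z (Prd C A B) \<and> Cmp C (Pr1 C A B) (Pair C f g) = f \<and> Cmp C (Pr2 C A B) (Pair C f g) = g"
proof -
  have A: "A \<in> Ob C" and B: "B \<in> Ob C" using assms cod_ob by auto
  show ?thesis using fpAB[OF A B, THEN conjunct2, THEN conjunct2, THEN conjunct2, THEN conjunct1, rule_format, OF assms] .
qed
lemma pair_hom[intro]: "f \<in> hom C Z A \<Longrightarrow> g \<in> hom C Z B \<Longrightarrow> Pair C f g \<in> hom C Z (Prd C A B)"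
  using fp_pair by blast
lemma pr1_pair: "f \<in> hom C Z A \<Longrightarrow> g \<in> hom C Z B \<Longrightarrow> Cmp C (Pr1 C A B) (Pair C f g) = f"
  using fp_pair by blast
lemma pr2_pair: "f \<in> hom C Z A \<Longrightarrow> g \<in> hom C Z B \<Longrightarrow> Cmp C (Pr2 C A B) (Pair C f g) = g"
  using fp_pair by blast
lemma pair_eta: "A \<in> Ob C \<Longrightarrow> B \<in> Ob C \<Longrightarrow> h \<in> hom C Z (Prd C A B) \<Longrightarrow>
   h = Pair C (Cmp C (Pr1 C A B) h) (Cmp C (Pr2 C A B) h)"
  by (rule fpAB[THEN conjunct2, THEN conjunct2, THEN conjunct2, THEN conjunct2, rule_format])

lemma pair_unique: "A \<in> Ob C \<Longrightarrow> B \<in> Ob C \<Longrightarrow> h \<in> hom C Z (Prd C A B) \<Longrightarrow>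
   Cmp C (Pr1 C A B) h = f \<Longrightarrow> Cmp C (Pr2 C A B) h = g \<Longrightarrow> h = Pair C f g"
  using pair_eta by blast

lemma pair_comp: assumes f: "f \<in> hom C Z A" and g: "g \<in> hom C Z B" and u: "u \<in> hom C Y Z"
  shows "Cmp C (Pair C f g) u = Pair C (Cmp C f u) (Cmp C g u)"
proof -
  have A: "A \<in> Ob C" and B: "B \<in> Ob C" using f g cod_ob by auto
  have p: "Pair C f g \<in> hom C Z (Prd C A B)" using f g by blast
  show ?thesis
  proof (rule pair_unique[OF A B])
    show "Cmp C (Pair C f g) u \<in> hom C Y (Prd C A B)" using p u by blast
    show "Cmp C (Pr1 C A B) (Cmp C (Pair C f g) u) = Cmp C f u"
      using assoc[OF u p pr1_hom[OF A B]] pr1_pair[OF f g] by simp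
    show "Cmp C (Pr2 C A B) (Cmp C (Pair C f g) u) = Cmp C g u"
      using assoc[OF u p pr2_hom[OF A B]] pr2_pair[OF f g] by simp
  qed
qed

lemma pair_id: "A \<in> Ob C \<Longrightarrow> B \<in> Ob C \<Longrightarrow> Pair C (Pr1 C A B) (Pr2 C A B) = Idt C (Prd C A B)"
  by (metis id_hom id_r pair_eta pr1_hom pr2_hom prd_ob)

lemmas dd = doc[unfolded doctrine_def]
lemma re_in[intro]: "f \<in> hom C A B \<Longrightarrow> b \<in> Pd D B \<Longrightarrow> Re D f b \<in> Pd D A"
  by (rule dd[THEN conjunct2, THEN conjunct2, THEN conjunct1, rule_format, THEN conjunct1, rule_format])
lemma re_mono: "f \<in> hom C A B \<Longrightarrow> b \<in> Pd D B \<Longrightarrow> c \<in> Pd D B \<Longrightarrow> Le D B b c \<Longrightarrow> Le D A (Re D f b) (Re D f c)"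
  by (rule dd[THEN conjunct2, THEN conjunct2, THEN conjunct1, rule_format, THEN conjunct2, rule_format])
lemma re_id: "A \<in> Ob C \<Longrightarrow> a \<in> Pd D A \<Longrightarrow> Re D (Idt C A) a = a"
  by (rule dd[THEN conjunct2, THEN conjunct2, THEN conjunct2, THEN conjunct1, rule_format])
lemma re_comp: "f \<in> hom C A B \<Longrightarrow> g \<in> hom C B E \<Longrightarrow> c \<in> Pd D E \<Longrightarrow> Re D (Cmp C g f) c = Re D f (Re D g c)"
  by (rule dd[THEN conjunct2, THEN conjunct2, THEN conjunct2, THEN conjunct2, rule_format])
lemma le_refl: "A \<in> Ob C \<Longrightarrow> a \<in> Pd D A \<Longrightarrow> Le D A a a"
  by (rule dd[THEN conjunct2, THEN conjunct1, rule_format, THEN conjunct1, rule_format])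
lemma le_antisym: "A \<in> Ob C \<Longrightarrow> a \<in> Pd D A \<Longrightarrow> b \<in> Pd D A \<Longrightarrow> Le D A a b \<Longrightarrow> Le D A b a \<Longrightarrow> a = b"
  by (rule dd[THEN conjunct2, THEN conjunct1, rule_format, THEN conjunct2, THEN conjunct1, rule_format])
lemma le_trans: "A \<in> Ob C \<Longrightarrow> a \<in> Pd D A \<Longrightarrow> b \<in> Pd D A \<Longrightarrow> c \<in> Pd D A \<Longrightarrow> Le D A a b \<Longrightarrow> Le D A b c \<Longrightarrow> Le D A a c"
  by (rule dd[THEN conjunct2, THEN conjunct1, rule_format, THEN conjunct2, THEN conjunct2, rule_format])

lemmas pd = prim[unfolded primary_def]
lemma meet_in[intro]: "A \<in> Ob C \<Longrightarrow> a \<in> Pd D A \<Longrightarrow> b \<in> Pd D A \<Longrightarrow> Meet A a b \<in> Pd D A"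
  by (rule pd[THEN conjunct2, THEN conjunct1, rule_format, THEN conjunct1])
lemma meet_le1: "A \<in> Ob C \<Longrightarrow> a \<in> Pd D A \<Longrightarrow> b \<in> Pd D A \<Longrightarrow> Le D A (Meet A a b) a"
  by (rule pd[THEN conjunct2, THEN conjunct1, rule_format, THEN conjunct2, THEN conjunct1])
lemma meet_le2: "A \<in> Ob C \<Longrightarrow> a \<in> Pd D A \<Longrightarrow> b \<in> Pd D A \<Longrightarrow> Le D A (Meet A a b) b"
  by (rule pd[THEN conjunct2, THEN conjunct1, rule_format, THEN conjunct2, THEN conjunct2, THEN conjunct1])
lemma meet_glb: "A \<in> Ob C \<Longrightarrow> a \<in> Pd D A \<Longrightarrow> b \<in> Pd D A \<Longrightarrow> c \<in> Pd D A \<Longrightarrow> Le D A c a \<Longrightarrow> Le D A c b \<Longrightarrow> Le D A c (Meet A a b)"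
  by (rule pd[THEN conjunct2, THEN conjunct1, rule_format, THEN conjunct2, THEN conjunct2, THEN conjunct2, rule_format])
lemma re_meet: "f \<in> hom C A B \<Longrightarrow> a \<in> Pd D B \<Longrightarrow> b \<in> Pd D B \<Longrightarrow> Re D f (Meet B a b) = Meet A (Re D f a) (Re D f b)"
  by (rule pd[THEN conjunct2, THEN conjunct2, rule_format])

lemmas cd = coco[unfolded cocomprehension_def]
lemma bot_in[intro]: "A \<in> Ob C \<Longrightarrow> Bot A \<in> Pd D A"
  by (rule cd[THEN conjunct1, rule_format, THEN conjunct1])
lemma bot_le: "A \<in> Ob C \<Longrightarrow> a \<in> Pd D A \<Longrightarrow> Le D A (Bot A) a"
  by (rule cd[THEN conjunct1, rule_format, THEN conjunct2, rule_format])
lemma co_ob[intro]: "A \<in> Ob C \<Longrightarrow> a \<in> Pd D A \<Longrightarrow> CoObj A a \<in> Ob C"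
  by (rule cd[THEN conjunct2, rule_format, THEN conjunct1])
lemma co_hom[intro]: "A \<in> Ob C \<Longrightarrow> a \<in> Pd D A \<Longrightarrow> CoArr A a \<in> hom C (CoObj A a) A"
  by (rule cd[THEN conjunct2, rule_format, THEN conjunct2, THEN conjunct1])
lemma co_bot: "A \<in> Ob C \<Longrightarrow> a \<in> Pd D A \<Longrightarrow> Re D (CoArr A a) a = Bot (CoObj A a)"
  by (rule cd[THEN conjunct2, rule_format, THEN conjunct2, THEN conjunct2, THEN conjunct1])
lemma co_univ: "A \<in> Ob C \<Longrightarrow> a \<in> Pd D A \<Longrightarrow> f \<in> hom C Y A \<Longrightarrow> Re D f a = Bot Y \<Longrightarrow>
   \<exists>!g. g \<in> hom C Y (CoObj A a) \<and> Cmp C (CoArr A a) g = f"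
  by (rule cd[THEN conjunct2, rule_format, THEN conjunct2, THEN conjunct2, THEN conjunct2, rule_format])
lemma co_full: "A \<in> Ob C \<Longrightarrow> a \<in> Pd D A \<Longrightarrow> b \<in> Pd D A \<Longrightarrow> g \<in> hom C (CoObj A b) (CoObj A a) \<Longrightarrow>
    Cmp C (CoArr A a) g = CoArr A b \<Longrightarrow> Le D A a b"
  by (rule fcoco[unfolded full_cocomprehension_def, THEN conjunct2, rule_format], auto)



abbreviation "cm \<equiv> Cmp C"
abbreviation "pa \<equiv> Pair C"
abbreviation "pi1 \<equiv> Pr1 C"
abbreviation "pi2 \<equiv> Pr2 C"
abbreviation "pr \<equiv> Prd C"
abbreviation "ii \<equiv> Idt C"
abbreviation "re \<equiv> Re D"
abbreviation "le \<equiv> Le D"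
abbreviation "pd \<equiv> Pd D"
abbreviation "hm \<equiv> hom C"
abbreviation "gr \<equiv> graph C D Delta"

lemma delta_in[intro]: "A \<in> Ob C \<Longrightarrow> Delta A \<in> pd (pr A A)"
  by (rule elem[unfolded elementary_def, THEN conjunct2, rule_format, THEN conjunct1])

lemma elem_adj:
  assumes X: "X \<in> Ob C" and A: "A \<in> Ob C" and \<psi>: "\<psi> \<in> pd (pr X A)" and \<phi>: "\<phi> \<in> pd (pr (pr X A) A)"
  shows "le (pr (pr X A) A) (Meet (pr (pr X A) A)
            (re (pa (cm (pi1 X A) (pi1 (pr X A) A)) (cm (pi2 X A) (pi1 (pr X A) A))) \<psi>)
            (re (pa (cm (pi2 X A) (pi1 (pr X A) A)) (pi2 (pr X A) A)) (Delta A))) \<phi>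
     \<longleftrightarrow> le (pr X A) \<psi> (re (pa (ii (pr X A)) (pi2 X A)) \<phi>)"
proof -
  have "let XA = Prd C X A; T = Prd C XA A;
              p1 = Cmp C (Pr1 C X A) (Pr1 C XA A);
              p2 = Cmp C (Pr2 C X A) (Pr1 C XA A);
              p3 = Pr2 C XA A;
              idD = Pair C (Idt C XA) (Pr2 C X A)
          in \<forall>\<psi>\<in>Pd D XA. \<forall>\<phi>\<in>Pd D T.
               Le D T (Meet T (Re D (Pair C p1 p2) \<psi>) (Re D (Pair C p2 p3) (Delta A))) \<phi>
               \<longleftrightarrow> Le D XA \<psi> (Re D idD \<phi>)"
    by (rule elem[unfolded elementary_def, THEN conjunct2, rule_format, OF A, THEN conjunct2, rule_format, OF X])
  thus ?thesis unfolding Let_def using \<psi> \<phi> by blast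
qed

lemma ob2: "X \<in> Ob C \<Longrightarrow> A \<in> Ob C \<Longrightarrow> pr (pr X A) A \<in> Ob C" by blast

lemma q12: assumes X: "X \<in> Ob C" and A: "A \<in> Ob C"
  shows "pa (cm (pi1 X A) (pi1 (pr X A) A)) (cm (pi2 X A) (pi1 (pr X A) A)) = pi1 (pr X A) A"
  using pair_eta[OF X A pr1_hom[OF prd_ob[OF X A] A]] by simp

lemma q_idD: assumes X: "X \<in> Ob C" and A: "A \<in> Ob C"
  shows "cm (pi1 (pr X A) A) (pa (ii (pr X A)) (pi2 X A)) = ii (pr X A)"
    and "cm (pi2 (pr X A) A) (pa (ii (pr X A)) (pi2 X A)) = pi2 X A"
  using pr1_pair[OF id_hom[OF prd_ob[OF X A]] pr2_hom[OF X A]] pr2_pair[OF id_hom[OF prd_ob[OF X A]] pr2_hom[OF X A]] by simp_all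

lemma idD_hom: "X \<in> Ob C \<Longrightarrow> A \<in> Ob C \<Longrightarrow> pa (ii (pr X A)) (pi2 X A) \<in> hm (pr X A) (pr (pr X A) A)"
  by (intro pair_hom id_hom pr2_hom prd_ob)

lemma delta_comp: assumes v: "v \<in> hm W A"
  shows "pa v v = cm (pa (ii A) (ii A)) v"
proof -
  have A: "A \<in> Ob C" using v cod_ob by blast
  show ?thesis using pair_comp[OF id_hom[OF A] id_hom[OF A] v] id_l[OF v] by simp
qed

definition dl where "dl A = re (pa (ii A) (ii A)) (Delta A)"
lemma dl_in[intro]: "A \<in> Ob C \<Longrightarrow> dl A \<in> pd A"
  unfolding dl_def by blast

lemmas hi = id_hom comp_hom pr1_hom pr2_hom pair_hom prd_ob co_ob co_hom delta_in dl_in re_in meet_in bot_in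

lemma top_le: assumes v: "v \<in> hm W A" and \<psi>: "\<psi> \<in> pd W"
  shows "le W \<psi> (re v (dl A))"
proof -
  have W: "W \<in> Ob C" and A: "A \<in> Ob C" using v dom_ob cod_ob by blast+
  let ?XA = "pr W A" and ?T = "pr (pr W A) A"
  let ?idD = "pa (ii ?XA) (pi2 W A)"
  let ?q = "pa (cm (pi1 W A) (pi1 ?XA A)) (cm (pi2 W A) (pi1 ?XA A))"
  let ?r = "pa (cm (pi2 W A) (pi1 ?XA A)) (pi2 ?XA A)"
  define \<psi>' where "\<psi>' = re (pi1 W A) \<psi>"
  have \<psi>': "\<psi>' \<in> pd ?XA" unfolding \<psi>'_def by (rule hi W A \<psi>)+
  have qh: "?q \<in> hm ?T ?XA" by (rule hi W A)+
  have rh: "?r \<in> hm ?T (pr A A)" by (rule hi W A)+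
  have T: "?T \<in> Ob C" by (rule hi W A)+
  have XA: "?XA \<in> Ob C" by (rule hi W A)+
  have idh: "?idD \<in> hm ?XA ?T" by (rule idD_hom[OF W A])
  have rq: "re ?q \<psi>' \<in> pd ?T" by (rule hi qh \<psi>')+
  have rr: "re ?r (Delta A) \<in> pd ?T" by (rule hi rh A)+
  have L: "Meet ?T (re ?q \<psi>') (re ?r (Delta A)) \<in> pd ?T" by (rule hi T rq rr)+
  have 1: "le ?XA \<psi>' (re ?idD (Meet ?T (re ?q \<psi>') (re ?r (Delta A))))"
    using elem_adj[OF W A \<psi>' L] le_refl[OF T L] by blast
  have c1: "cm ?q ?idD = ii ?XA" using q12[OF W A] q_idD[OF W A] by simp
  have c2: "cm ?r ?idD = cm (pa (ii A) (ii A)) (pi2 W A)"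
  proof -
    have "cm ?r ?idD = pa (cm (cm (pi2 W A) (pi1 ?XA A)) ?idD) (cm (pi2 ?XA A) ?idD)"
      by (rule pair_comp) (rule hi W A)+
    also have "cm (cm (pi2 W A) (pi1 ?XA A)) ?idD = pi2 W A"
      using assoc[OF idD_hom[OF W A] pr1_hom[OF prd_ob[OF W A] A] pr2_hom[OF W A]] q_idD[OF W A]
        id_r[OF pr2_hom[OF W A]] by simp
    finally show ?thesis using q_idD[OF W A] delta_comp[OF pr2_hom[OF W A]] by simp
  qed
  have "re ?idD (Meet ?T (re ?q \<psi>') (re ?r (Delta A))) = Meet ?XA (re ?idD (re ?q \<psi>')) (re ?idD (re ?r (Delta A)))"
    by (rule re_meet[OF idh rq rr])
  also have "re ?idD (re ?q \<psi>') = \<psi>'"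
    using re_comp[OF idh qh \<psi>'] c1 re_id[OF XA \<psi>'] by simp
  also have "re ?idD (re ?r (Delta A)) = re (pi2 W A) (dl A)"
    using re_comp[OF idh rh delta_in[OF A]] c2 re_comp[OF pr2_hom[OF W A] _ delta_in[OF A]] unfolding dl_def
    by (simp add: hi A)
  finally have e: "re ?idD (Meet ?T (re ?q \<psi>') (re ?r (Delta A))) = Meet ?XA \<psi>' (re (pi2 W A) (dl A))" .
  have d2: "re (pi2 W A) (dl A) \<in> pd ?XA" by (rule hi W A)+
  have 2: "le ?XA \<psi>' (re (pi2 W A) (dl A))"
    using le_trans[OF XA \<psi>' _ d2 1[unfolded e] meet_le2[OF XA \<psi>' d2]] meet_in[OF XA \<psi>' d2] by blast
  have s: "pa (ii W) v \<in> hm W ?XA" by (rule hi W v)+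
  have "le W (re (pa (ii W) v) \<psi>') (re (pa (ii W) v) (re (pi2 W A) (dl A)))"
    by (rule re_mono[OF s \<psi>' d2 2])
  moreover have "re (pa (ii W) v) \<psi>' = \<psi>" unfolding \<psi>'_def
    using re_comp[OF s pr1_hom[OF W A] \<psi>] pr1_pair[OF id_hom[OF W] v] re_id[OF W \<psi>] by simp
  moreover have "re (pa (ii W) v) (re (pi2 W A) (dl A)) = re v (dl A)"
    using re_comp[OF s pr2_hom[OF W A] dl_in[OF A]] pr2_pair[OF id_hom[OF W] v] by simp
  ultimately show ?thesis by simp
qed


lemma meet_comm: "A \<in> Ob C \<Longrightarrow> a \<in> pd A \<Longrightarrow> b \<in> pd A \<Longrightarrow> Meet A a b = Meet A b a"
  by (rule le_antisym) (auto intro: meet_glb meet_le1 meet_le2)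

lemma meet_mono2: "A \<in> Ob C \<Longrightarrow> a \<in> pd A \<Longrightarrow> b \<in> pd A \<Longrightarrow> b' \<in> pd A \<Longrightarrow> le A b b' \<Longrightarrow> le A (Meet A a b) (Meet A a b')"
  by (rule meet_glb) (auto intro: meet_le1 meet_le2 le_trans[OF _ _ _ _ meet_le2])

lemma le_trans3: "A \<in> Ob C \<Longrightarrow> a \<in> pd A \<Longrightarrow> b \<in> pd A \<Longrightarrow> c \<in> pd A \<Longrightarrow> le A a b \<Longrightarrow> le A b c \<Longrightarrow> le A a c"
  by (rule le_trans)

abbreviation "PP1 X A \<equiv> cm (pi1 X A) (pi1 (pr X A) A)"
abbreviation "PP2 X A \<equiv> cm (pi2 X A) (pi1 (pr X A) A)"
abbreviation "PP3 X A \<equiv> pi2 (pr X A) A"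
abbreviation "IDD X A \<equiv> pa (ii (pr X A)) (pi2 X A)"

lemma PP_hom: assumes X: "X \<in> Ob C" and A: "A \<in> Ob C"
  shows "PP1 X A \<in> hm (pr (pr X A) A) X" "PP2 X A \<in> hm (pr (pr X A) A) A" "PP3 X A \<in> hm (pr (pr X A) A) A"
  by (rule hi X A)+

lemma PP_idD: assumes X: "X \<in> Ob C" and A: "A \<in> Ob C"
  shows "cm (PP1 X A) (IDD X A) = pi1 X A" "cm (PP2 X A) (IDD X A) = pi2 X A" "cm (PP3 X A) (IDD X A) = pi2 X A"
proof -
  have i: "IDD X A \<in> hm (pr X A) (pr (pr X A) A)" by (rule idD_hom[OF X A])
  show "cm (PP1 X A) (IDD X A) = pi1 X A"
    using assoc[OF i pr1_hom[OF prd_ob[OF X A] A] pr1_hom[OF X A]] q_idD[OF X A] id_r[OF pr1_hom[OF X A]] by simp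
  show "cm (PP2 X A) (IDD X A) = pi2 X A"
    using assoc[OF i pr1_hom[OF prd_ob[OF X A] A] pr2_hom[OF X A]] q_idD[OF X A] id_r[OF pr2_hom[OF X A]] by simp
  show "cm (PP3 X A) (IDD X A) = pi2 X A" using q_idD[OF X A] by simp
qed

lemma FS: assumes X: "X \<in> Ob C" and A: "A \<in> Ob C" and \<xi>: "\<xi> \<in> pd A"
  shows "le (pr (pr X A) A) (Meet (pr (pr X A) A) (re (PP2 X A) \<xi>) (re (pa (PP2 X A) (PP3 X A)) (Delta A))) (re (PP3 X A) \<xi>)"
proof -
  have T: "pr (pr X A) A \<in> Ob C" and XA: "pr X A \<in> Ob C" by (rule hi X A)+
  have \<psi>: "re (pi2 X A) \<xi> \<in> pd (pr X A)" by (rule hi X A \<xi>)+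
  have \<phi>: "re (PP3 X A) \<xi> \<in> pd (pr (pr X A) A)" by (rule hi X A \<xi>)+
  have "re (IDD X A) (re (PP3 X A) \<xi>) = re (pi2 X A) \<xi>"
    using re_comp[OF idD_hom[OF X A] PP_hom(3)[OF X A] \<xi>] PP_idD(3)[OF X A] by simp
  hence "le (pr X A) (re (pi2 X A) \<xi>) (re (IDD X A) (re (PP3 X A) \<xi>))" using le_refl[OF XA \<psi>] by simp
  hence 1: "le (pr (pr X A) A) (Meet (pr (pr X A) A)
            (re (pa (PP1 X A) (PP2 X A)) (re (pi2 X A) \<xi>))
            (re (pa (PP2 X A) (PP3 X A)) (Delta A))) (re (PP3 X A) \<xi>)"
    using elem_adj[OF X A \<psi> \<phi>] by blast
  have "re (pa (PP1 X A) (PP2 X A)) (re (pi2 X A) \<xi>) = re (PP2 X A) \<xi>"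
    using q12[OF X A] re_comp[OF pr1_hom[OF XA A] pr2_hom[OF X A] \<xi>] by simp
  thus ?thesis using 1 by simp
qed

lemma SYM: assumes X: "X \<in> Ob C" and A: "A \<in> Ob C"
  shows "le (pr (pr X A) A) (re (pa (PP2 X A) (PP3 X A)) (Delta A)) (re (pa (PP3 X A) (PP2 X A)) (Delta A))"
proof -
  let ?T = "pr (pr X A) A"
  have T: "?T \<in> Ob C" and XA: "pr X A \<in> Ob C" by (rule hi X A)+
  have \<psi>: "re (pi2 X A) (dl A) \<in> pd (pr X A)" by (rule hi X A)+
  have h32: "pa (PP3 X A) (PP2 X A) \<in> hm ?T (pr A A)" and h23: "pa (PP2 X A) (PP3 X A) \<in> hm ?T (pr A A)"
    by (rule hi X A)+
  have \<phi>: "re (pa (PP3 X A) (PP2 X A)) (Delta A) \<in> pd ?T" by (rule re_in[OF h32 delta_in[OF A]])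
  have r: "re (pa (PP2 X A) (PP3 X A)) (Delta A) \<in> pd ?T" by (rule re_in[OF h23 delta_in[OF A]])
  have c: "cm (pa (PP3 X A) (PP2 X A)) (IDD X A) = cm (pa (ii A) (ii A)) (pi2 X A)"
    using pair_comp[OF PP_hom(3)[OF X A] PP_hom(2)[OF X A] idD_hom[OF X A]] PP_idD[OF X A]
      delta_comp[OF pr2_hom[OF X A]] by simp
  have "re (IDD X A) (re (pa (PP3 X A) (PP2 X A)) (Delta A)) = re (pi2 X A) (dl A)"
    using re_comp[OF idD_hom[OF X A] h32 delta_in[OF A]] c
      re_comp[OF pr2_hom[OF X A] _ delta_in[OF A]] unfolding dl_def by (simp add: hi A)
  hence "le (pr X A) (re (pi2 X A) (dl A)) (re (IDD X A) (re (pa (PP3 X A) (PP2 X A)) (Delta A)))"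
    using le_refl[OF XA \<psi>] by simp
  hence 1: "le ?T (Meet ?T (re (pa (PP1 X A) (PP2 X A)) (re (pi2 X A) (dl A)))
            (re (pa (PP2 X A) (PP3 X A)) (Delta A))) (re (pa (PP3 X A) (PP2 X A)) (Delta A))"
    using elem_adj[OF X A \<psi> \<phi>] by blast
  have e: "re (pa (PP1 X A) (PP2 X A)) (re (pi2 X A) (dl A)) = re (PP2 X A) (dl A)"
    using q12[OF X A] re_comp[OF pr1_hom[OF XA A] pr2_hom[OF X A] dl_in[OF A]] by simp
  have t: "le ?T (re (pa (PP2 X A) (PP3 X A)) (Delta A)) (re (PP2 X A) (dl A))"
    by (rule top_le[OF PP_hom(2)[OF X A] r])
  have p2: "re (PP2 X A) (dl A) \<in> pd ?T" by (rule re_in[OF PP_hom(2)[OF X A] dl_in[OF A]])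
  have "le ?T (re (pa (PP2 X A) (PP3 X A)) (Delta A)) (Meet ?T (re (PP2 X A) (dl A)) (re (pa (PP2 X A) (PP3 X A)) (Delta A)))"
    by (rule meet_glb[OF T p2 r r t le_refl[OF T r]])
  thus ?thesis using 1 e le_trans[OF T r meet_in[OF T p2 r] \<phi>] by simp
qed


lemma RS: assumes X: "X \<in> Ob C" and A: "A \<in> Ob C" and \<xi>: "\<xi> \<in> pd A"
  shows "le (pr (pr X A) A) (Meet (pr (pr X A) A) (re (PP3 X A) \<xi>) (re (pa (PP2 X A) (PP3 X A)) (Delta A))) (re (PP2 X A) \<xi>)"
proof -
  let ?T = "pr (pr X A) A" and ?XA = "pr X A"
  let ?s = "pa (pa (PP1 X A) (PP3 X A)) (PP2 X A)"
  have T: "?T \<in> Ob C" and XA: "?XA \<in> Ob C" by (rule hi X A)+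
  have h1: "PP1 X A \<in> hm ?T X" and h2: "PP2 X A \<in> hm ?T A" and h3: "PP3 X A \<in> hm ?T A"
    by (rule PP_hom[OF X A])+
  have s: "?s \<in> hm ?T ?T" by (rule hi h1 h2 h3)+
  have s13: "pa (PP1 X A) (PP3 X A) \<in> hm ?T ?XA" by (rule hi h1 h3)+
  have c2: "cm (PP2 X A) ?s = PP3 X A"
  proof -
    have "cm (PP2 X A) ?s = cm (pi2 X A) (cm (pi1 ?XA A) ?s)"
      using assoc[OF s pr1_hom[OF XA A] pr2_hom[OF X A]] by simp
    also have "... = cm (pi2 X A) (pa (PP1 X A) (PP3 X A))" using pr1_pair[OF s13 h2] by simp
    also have "... = PP3 X A" using pr2_pair[OF h1 h3] by simp
    finally show ?thesis .
  qed
  have c3: "cm (PP3 X A) ?s = PP2 X A" using pr2_pair[OF s13 h2] by simp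
  have h23: "pa (PP2 X A) (PP3 X A) \<in> hm ?T (pr A A)" and h32: "pa (PP3 X A) (PP2 X A) \<in> hm ?T (pr A A)"
    by (rule hi h2 h3)+
  have c23: "cm (pa (PP2 X A) (PP3 X A)) ?s = pa (PP3 X A) (PP2 X A)"
    using pair_comp[OF h2 h3 s] c2 c3 by simp
  have a2: "re (PP2 X A) \<xi> \<in> pd ?T" and a3: "re (PP3 X A) \<xi> \<in> pd ?T" by (rule hi h2 h3 \<xi>)+
  have d23: "re (pa (PP2 X A) (PP3 X A)) (Delta A) \<in> pd ?T" and d32: "re (pa (PP3 X A) (PP2 X A)) (Delta A) \<in> pd ?T"
    by (rule re_in[OF h23 delta_in[OF A]] re_in[OF h32 delta_in[OF A]])+
  have m: "Meet ?T (re (PP2 X A) \<xi>) (re (pa (PP2 X A) (PP3 X A)) (Delta A)) \<in> pd ?T" by (rule meet_in[OF T a2 d23])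
  have 1: "le ?T (re ?s (Meet ?T (re (PP2 X A) \<xi>) (re (pa (PP2 X A) (PP3 X A)) (Delta A)))) (re ?s (re (PP3 X A) \<xi>))"
    by (rule re_mono[OF s m a3 FS[OF X A \<xi>]])
  have e1: "re ?s (Meet ?T (re (PP2 X A) \<xi>) (re (pa (PP2 X A) (PP3 X A)) (Delta A)))
       = Meet ?T (re (PP3 X A) \<xi>) (re (pa (PP3 X A) (PP2 X A)) (Delta A))"
    using re_meet[OF s a2 d23] re_comp[OF s h2 \<xi>] re_comp[OF s h23 delta_in[OF A]] c2 c23 by simp
  have e2: "re ?s (re (PP3 X A) \<xi>) = re (PP2 X A) \<xi>" using re_comp[OF s h3 \<xi>] c3 by simp
  have 2: "le ?T (Meet ?T (re (PP3 X A) \<xi>) (re (pa (PP3 X A) (PP2 X A)) (Delta A))) (re (PP2 X A) \<xi>)"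
    using 1 e1 e2 by simp
  have 3: "le ?T (Meet ?T (re (PP3 X A) \<xi>) (re (pa (PP2 X A) (PP3 X A)) (Delta A)))
                 (Meet ?T (re (PP3 X A) \<xi>) (re (pa (PP3 X A) (PP2 X A)) (Delta A)))"
    by (rule meet_mono2[OF T a3 d23 d32 SYM[OF X A]])
  show ?thesis by (rule le_trans[OF T _ _ a2 3 2]) (rule hi T a3 d23 d32)+
qed

lemma gr_eq: "f \<in> hm X A \<Longrightarrow> gr f = re (pa (cm f (pi1 X A)) (pi2 X A)) (Delta A)"
  unfolding graph_def Let_def using homD by auto

lemma gr_in[intro]: assumes f: "f \<in> hm X A" shows "gr f \<in> pd (pr X A)"
proof -
  have X: "X \<in> Ob C" and A: "A \<in> Ob C" using f dom_ob cod_ob by blast+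
  show ?thesis unfolding gr_eq[OF f] by (rule hi X A f)+
qed

lemma graph_u: assumes f: "f \<in> hm X A"
  defines "u \<equiv> pa (pa (pi1 X A) (cm f (pi1 X A))) (pi2 X A)"
  shows "u \<in> hm (pr X A) (pr (pr X A) A)" "cm (PP2 X A) u = cm f (pi1 X A)" "cm (PP3 X A) u = pi2 X A"
    "cm (pa (PP2 X A) (PP3 X A)) u = pa (cm f (pi1 X A)) (pi2 X A)"
proof -
  have X: "X \<in> Ob C" and A: "A \<in> Ob C" using f dom_ob cod_ob by blast+
  have i: "pa (pi1 X A) (cm f (pi1 X A)) \<in> hm (pr X A) (pr X A)" by (rule hi X A f)+
  show u: "u \<in> hm (pr X A) (pr (pr X A) A)" unfolding u_def by (rule hi X A f)+
  show c2: "cm (PP2 X A) u = cm f (pi1 X A)"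
    using assoc[OF u pr1_hom[OF prd_ob[OF X A] A] pr2_hom[OF X A]] pr1_pair[OF i pr2_hom[OF X A]]
      pr2_pair[OF pr1_hom[OF X A] comp_hom[OF pr1_hom[OF X A] f]] unfolding u_def by simp
  show c3: "cm (PP3 X A) u = pi2 X A" unfolding u_def using pr2_pair[OF i pr2_hom[OF X A]] by simp
  show "cm (pa (PP2 X A) (PP3 X A)) u = pa (cm f (pi1 X A)) (pi2 X A)"
    using pair_comp[OF PP_hom(2)[OF X A] PP_hom(3)[OF X A] u] c2 c3 by simp
qed

lemma GF: assumes f: "f \<in> hm X A" and \<xi>: "\<xi> \<in> pd A"
  shows "le (pr X A) (Meet (pr X A) (gr f) (re (cm f (pi1 X A)) \<xi>)) (re (pi2 X A) \<xi>)"
proof -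
  have X: "X \<in> Ob C" and A: "A \<in> Ob C" using f dom_ob cod_ob by blast+
  let ?T = "pr (pr X A) A" and ?XA = "pr X A"
  define u where "u \<equiv> pa (pa (pi1 X A) (cm f (pi1 X A))) (pi2 X A)"
  note U = graph_u[OF f, folded u_def]
  have T: "?T \<in> Ob C" and XA: "?XA \<in> Ob C" by (rule hi X A)+
  have h2: "PP2 X A \<in> hm ?T A" and h3: "PP3 X A \<in> hm ?T A" by (rule PP_hom[OF X A])+
  have h23: "pa (PP2 X A) (PP3 X A) \<in> hm ?T (pr A A)" by (rule hi h2 h3)+
  have a2: "re (PP2 X A) \<xi> \<in> pd ?T" and a3: "re (PP3 X A) \<xi> \<in> pd ?T" by (rule hi h2 h3 \<xi>)+
  have d23: "re (pa (PP2 X A) (PP3 X A)) (Delta A) \<in> pd ?T" by (rule re_in[OF h23 delta_in[OF A]])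
  have m: "Meet ?T (re (PP2 X A) \<xi>) (re (pa (PP2 X A) (PP3 X A)) (Delta A)) \<in> pd ?T" by (rule meet_in[OF T a2 d23])
  have 1: "le ?XA (re u (Meet ?T (re (PP2 X A) \<xi>) (re (pa (PP2 X A) (PP3 X A)) (Delta A)))) (re u (re (PP3 X A) \<xi>))"
    by (rule re_mono[OF U(1) m a3 FS[OF X A \<xi>]])
  have "re u (Meet ?T (re (PP2 X A) \<xi>) (re (pa (PP2 X A) (PP3 X A)) (Delta A)))
        = Meet ?XA (re (cm f (pi1 X A)) \<xi>) (gr f)"
    using re_meet[OF U(1) a2 d23] re_comp[OF U(1) h2 \<xi>] re_comp[OF U(1) h23 delta_in[OF A]] U gr_eq[OF f] by simp
  moreover have "re u (re (PP3 X A) \<xi>) = re (pi2 X A) \<xi>" using re_comp[OF U(1) h3 \<xi>] U by simp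
  moreover have "Meet ?XA (re (cm f (pi1 X A)) \<xi>) (gr f) = Meet ?XA (gr f) (re (cm f (pi1 X A)) \<xi>)"
    by (rule meet_comm[OF XA]) (rule hi X A f \<xi> gr_in)+
  ultimately show ?thesis using 1 by simp
qed

lemma GR: assumes f: "f \<in> hm X A" and \<xi>: "\<xi> \<in> pd A"
  shows "le (pr X A) (Meet (pr X A) (gr f) (re (pi2 X A) \<xi>)) (re (cm f (pi1 X A)) \<xi>)"
proof -
  have X: "X \<in> Ob C" and A: "A \<in> Ob C" using f dom_ob cod_ob by blast+
  let ?T = "pr (pr X A) A" and ?XA = "pr X A"
  define u where "u \<equiv> pa (pa (pi1 X A) (cm f (pi1 X A))) (pi2 X A)"
  note U = graph_u[OF f, folded u_def]
  have T: "?T \<in> Ob C" and XA: "?XA \<in> Ob C" by (rule hi X A)+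
  have h2: "PP2 X A \<in> hm ?T A" and h3: "PP3 X A \<in> hm ?T A" by (rule PP_hom[OF X A])+
  have h23: "pa (PP2 X A) (PP3 X A) \<in> hm ?T (pr A A)" by (rule hi h2 h3)+
  have a2: "re (PP2 X A) \<xi> \<in> pd ?T" and a3: "re (PP3 X A) \<xi> \<in> pd ?T" by (rule hi h2 h3 \<xi>)+
  have d23: "re (pa (PP2 X A) (PP3 X A)) (Delta A) \<in> pd ?T" by (rule re_in[OF h23 delta_in[OF A]])
  have m: "Meet ?T (re (PP3 X A) \<xi>) (re (pa (PP2 X A) (PP3 X A)) (Delta A)) \<in> pd ?T" by (rule meet_in[OF T a3 d23])
  have 1: "le ?XA (re u (Meet ?T (re (PP3 X A) \<xi>) (re (pa (PP2 X A) (PP3 X A)) (Delta A)))) (re u (re (PP2 X A) \<xi>))"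
    by (rule re_mono[OF U(1) m a2 RS[OF X A \<xi>]])
  have "re u (Meet ?T (re (PP3 X A) \<xi>) (re (pa (PP2 X A) (PP3 X A)) (Delta A)))
        = Meet ?XA (re (pi2 X A) \<xi>) (gr f)"
    using re_meet[OF U(1) a3 d23] re_comp[OF U(1) h3 \<xi>] re_comp[OF U(1) h23 delta_in[OF A]] U gr_eq[OF f] by simp
  moreover have "re u (re (PP2 X A) \<xi>) = re (cm f (pi1 X A)) \<xi>" using re_comp[OF U(1) h2 \<xi>] U by simp
  moreover have "Meet ?XA (re (pi2 X A) \<xi>) (gr f) = Meet ?XA (gr f) (re (pi2 X A) \<xi>)"
    by (rule meet_comm[OF XA]) (rule hi X A f \<xi> gr_in)+
  ultimately show ?thesis using 1 by simp
qed

lemma Gtop: assumes f: "f \<in> hm X A" and \<psi>: "\<psi> \<in> pd X"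
  shows "le X \<psi> (re (pa (ii X) f) (gr f))"
proof -
  have X: "X \<in> Ob C" and A: "A \<in> Ob C" using f dom_ob cod_ob by blast+
  have s: "pa (ii X) f \<in> hm X (pr X A)" by (rule hi X f)+
  have g: "pa (cm f (pi1 X A)) (pi2 X A) \<in> hm (pr X A) (pr A A)" by (rule hi X A f)+
  have "cm (pa (cm f (pi1 X A)) (pi2 X A)) (pa (ii X) f) = pa f f"
    using pair_comp[OF _ pr2_hom[OF X A] s, of "cm f (pi1 X A)" A] assoc[OF s pr1_hom[OF X A] f]
      pr1_pair[OF id_hom[OF X] f] pr2_pair[OF id_hom[OF X] f] id_r[OF f] hi X A f by auto
  hence "re (pa (ii X) f) (gr f) = re (pa f f) (Delta A)"
    unfolding gr_eq[OF f] using re_comp[OF s g delta_in[OF A]] by simp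
  also have "... = re f (dl A)" unfolding delta_comp[OF f] dl_def
    by (rule re_comp[OF f _ delta_in[OF A]]) (rule hi A)+
  finally have "re (pa (ii X) f) (gr f) = re f (dl A)" .
  thus ?thesis using top_le[OF f \<psi>] by simp
qed

lemma KEY: assumes f: "f \<in> hm X A" and \<phi>: "\<phi> \<in> pd X" and \<xi>: "\<xi> \<in> pd A"
  shows "le (pr X A) (Meet (pr X A) (gr f) (re (pi1 X A) \<phi>)) (re (pi2 X A) \<xi>) \<longleftrightarrow> le X \<phi> (re f \<xi>)"
proof -
  have X: "X \<in> Ob C" and A: "A \<in> Ob C" using f dom_ob cod_ob by blast+
  let ?XA = "pr X A"
  have XA: "?XA \<in> Ob C" by (rule hi X A)+
  have G: "gr f \<in> pd ?XA" by (rule gr_in[OF f])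
  have p1: "re (pi1 X A) \<phi> \<in> pd ?XA" by (rule hi X A \<phi>)+
  have fx: "re f \<xi> \<in> pd X" by (rule re_in[OF f \<xi>])
  have p1f: "re (pi1 X A) (re f \<xi>) \<in> pd ?XA" by (rule hi X A fx)+
  have p2: "re (pi2 X A) \<xi> \<in> pd ?XA" by (rule hi X A \<xi>)+
  have M: "Meet ?XA (gr f) (re (pi1 X A) \<phi>) \<in> pd ?XA" by (rule meet_in[OF XA G p1])
  have cf: "re (cm f (pi1 X A)) \<xi> = re (pi1 X A) (re f \<xi>)" by (rule re_comp[OF pr1_hom[OF X A] f \<xi>])
  show ?thesis
  proof
    assume H: "le ?XA (Meet ?XA (gr f) (re (pi1 X A) \<phi>)) (re (pi2 X A) \<xi>)"
    have s: "pa (ii X) f \<in> hm X ?XA" by (rule hi X f)+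
    have 1: "le X (re (pa (ii X) f) (Meet ?XA (gr f) (re (pi1 X A) \<phi>))) (re (pa (ii X) f) (re (pi2 X A) \<xi>))"
      by (rule re_mono[OF s M p2 H])
    have e1: "re (pa (ii X) f) (Meet ?XA (gr f) (re (pi1 X A) \<phi>)) = Meet X (re (pa (ii X) f) (gr f)) \<phi>"
      using re_meet[OF s G p1] re_comp[OF s pr1_hom[OF X A] \<phi>] pr1_pair[OF id_hom[OF X] f] re_id[OF X \<phi>] by simp
    have e2: "re (pa (ii X) f) (re (pi2 X A) \<xi>) = re f \<xi>"
      using re_comp[OF s pr2_hom[OF X A] \<xi>] pr2_pair[OF id_hom[OF X] f] by simp
    have sg: "re (pa (ii X) f) (gr f) \<in> pd X" by (rule re_in[OF s G])
    have "le X \<phi> (Meet X (re (pa (ii X) f) (gr f)) \<phi>)"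
      by (rule meet_glb[OF X sg \<phi> \<phi> Gtop[OF f \<phi>] le_refl[OF X \<phi>]])
    thus "le X \<phi> (re f \<xi>)" using 1 e1 e2 le_trans[OF X \<phi> meet_in[OF X sg \<phi>] fx] by simp
  next
    assume H: "le X \<phi> (re f \<xi>)"
    have 1: "le ?XA (re (pi1 X A) \<phi>) (re (pi1 X A) (re f \<xi>))" by (rule re_mono[OF pr1_hom[OF X A] \<phi> fx H])
    have 2: "le ?XA (Meet ?XA (gr f) (re (pi1 X A) \<phi>)) (Meet ?XA (gr f) (re (pi1 X A) (re f \<xi>)))"
      by (rule meet_mono2[OF XA G p1 p1f 1])
    have 3: "le ?XA (Meet ?XA (gr f) (re (pi1 X A) (re f \<xi>))) (re (pi2 X A) \<xi>)"
      using GF[OF f \<xi>] cf by simp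
    show "le ?XA (Meet ?XA (gr f) (re (pi1 X A) \<phi>)) (re (pi2 X A) \<xi>)"
      by (rule le_trans[OF XA M _ p2 2 3]) (rule meet_in[OF XA G p1f])
  qed
qed


lemma acW: assumes X: "X \<in> Ob C" and ns: "\<not> stable_initial C X" and A: "A \<in> Ob C" and \<psi>: "\<psi> \<in> pd (pr X A)"
  shows "EpsW A X \<psi> \<in> hm A X \<and> (\<forall>\<xi>\<in>pd A. le A (re (pa (EpsW A X \<psi>) (ii A)) \<psi>) \<xi> \<longleftrightarrow> le (pr X A) \<psi> (re (pi2 X A) \<xi>))"
  by (rule ac[unfolded AC_def, rule_format, OF X ns A, THEN conjunct2, rule_format, OF \<psi>])

lemma acC: assumes X: "X \<in> Ob C" and ns: "\<not> stable_initial C X" and A: "A \<in> Ob C" and \<psi>: "\<psi> \<in> pd (pr A X)"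
  shows "EpsC A X \<psi> \<in> hm A X"
  by (rule ac[unfolded AC_def, rule_format, OF X ns A, THEN conjunct1, rule_format, OF \<psi>, THEN conjunct1])

definition Psi where "Psi X A f \<phi> = Meet (pr X A) (gr f) (re (pi1 X A) \<phi>)"
definition SS where "SS X A f \<phi> = re (pa (EpsW A X (Psi X A f \<phi>)) (ii A)) (Psi X A f \<phi>)"
definition Im where "Im X A f = re (pa (EpsW A X (gr f)) (ii A)) (gr f)"

lemma Psi_in: assumes f: "f \<in> hm X A" and \<phi>: "\<phi> \<in> pd X" shows "Psi X A f \<phi> \<in> pd (pr X A)"
proof -
  have X: "X \<in> Ob C" and A: "A \<in> Ob C" using f dom_ob cod_ob by blast+
  show ?thesis unfolding Psi_def by (rule meet_in[OF prd_ob[OF X A] gr_in[OF f]]) (rule hi X A \<phi>)+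
qed

lemma SS_in: assumes f: "f \<in> hm X A" and ns: "\<not> stable_initial C X" and \<phi>: "\<phi> \<in> pd X"
  shows "SS X A f \<phi> \<in> pd A"
proof -
  have X: "X \<in> Ob C" and A: "A \<in> Ob C" using f dom_ob cod_ob by blast+
  have e: "EpsW A X (Psi X A f \<phi>) \<in> hm A X" using acW[OF X ns A Psi_in[OF f \<phi>]] by blast
  show ?thesis unfolding SS_def by (rule re_in[OF _ Psi_in[OF f \<phi>]]) (rule hi e A)+
qed

lemma SS_adj: assumes f: "f \<in> hm X A" and ns: "\<not> stable_initial C X" and \<phi>: "\<phi> \<in> pd X" and \<xi>: "\<xi> \<in> pd A"
  shows "le A (SS X A f \<phi>) \<xi> \<longleftrightarrow> le X \<phi> (re f \<xi>)"
proof -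
  have X: "X \<in> Ob C" and A: "A \<in> Ob C" using f dom_ob cod_ob by blast+
  have "le A (SS X A f \<phi>) \<xi> \<longleftrightarrow> le (pr X A) (Psi X A f \<phi>) (re (pi2 X A) \<xi>)"
    unfolding SS_def using acW[OF X ns A Psi_in[OF f \<phi>]] \<xi> by blast
  also have "... \<longleftrightarrow> le X \<phi> (re f \<xi>)" unfolding Psi_def by (rule KEY[OF f \<phi> \<xi>])
  finally show ?thesis .
qed

lemma Im_in: assumes f: "f \<in> hm X A" and ns: "\<not> stable_initial C X"
  shows "Im X A f \<in> pd A"
proof -
  have X: "X \<in> Ob C" and A: "A \<in> Ob C" using f dom_ob cod_ob by blast+
  have e: "EpsW A X (gr f) \<in> hm A X" using acW[OF X ns A gr_in[OF f]] by blast
  show ?thesis unfolding Im_def by (rule re_in[OF _ gr_in[OF f]]) (rule hi e A)+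
qed

lemma Im_unit: assumes f: "f \<in> hm X A" and ns: "\<not> stable_initial C X"
  shows "le (pr X A) (gr f) (re (pi2 X A) (Im X A f))"
proof -
  have X: "X \<in> Ob C" and A: "A \<in> Ob C" using f dom_ob cod_ob by blast+
  show ?thesis using acW[OF X ns A gr_in[OF f]] Im_in[OF f ns] le_refl[OF A Im_in[OF f ns]]
    unfolding Im_def by blast
qed

lemma SS_le_Im: assumes f: "f \<in> hm X A" and ns: "\<not> stable_initial C X" and \<phi>: "\<phi> \<in> pd X"
  shows "le A (SS X A f \<phi>) (Im X A f)"
proof -
  have X: "X \<in> Ob C" and A: "A \<in> Ob C" using f dom_ob cod_ob by blast+
  have XA: "pr X A \<in> Ob C" by (rule hi X A)+
  have I2: "re (pi2 X A) (Im X A f) \<in> pd (pr X A)" by (rule re_in[OF pr2_hom[OF X A] Im_in[OF f ns]])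
  have "le (pr X A) (Psi X A f \<phi>) (gr f)" unfolding Psi_def by (rule meet_le1[OF XA gr_in[OF f]]) (rule hi X A \<phi>)+
  hence "le (pr X A) (Psi X A f \<phi>) (re (pi2 X A) (Im X A f))"
    using le_trans[OF XA Psi_in[OF f \<phi>] gr_in[OF f] I2] Im_unit[OF f ns] by blast
  thus ?thesis unfolding SS_def using acW[OF X ns A Psi_in[OF f \<phi>]] Im_in[OF f ns] by blast
qed

lemma SS_counit: assumes f: "f \<in> hm X A" and ns: "\<not> stable_initial C X" and \<xi>: "\<xi> \<in> pd A"
  shows "le A (SS X A f (re f \<xi>)) \<xi>"
proof -
  have X: "X \<in> Ob C" using f dom_ob by blast
  show ?thesis using SS_adj[OF f ns re_in[OF f \<xi>] \<xi>] le_refl[OF X re_in[OF f \<xi>]] by blast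
qed

lemma SS_unit: assumes f: "f \<in> hm X A" and ns: "\<not> stable_initial C X" and \<phi>: "\<phi> \<in> pd X"
  shows "le X \<phi> (re f (SS X A f \<phi>))"
proof -
  have A: "A \<in> Ob C" using f cod_ob by blast
  show ?thesis using SS_adj[OF f ns \<phi> SS_in[OF f ns \<phi>]] le_refl[OF A SS_in[OF f ns \<phi>]] by blast
qed

lemma ImBC: assumes f: "f \<in> hm X A" and ns: "\<not> stable_initial C X" and \<chi>: "\<chi> \<in> pd A" and \<zeta>: "\<zeta> \<in> pd A"
  and H: "le X (re f \<chi>) (re f \<zeta>)"
  shows "le A (Meet A \<chi> (Im X A f)) \<zeta>"
proof -
  have X: "X \<in> Ob C" and A: "A \<in> Ob C" using f dom_ob cod_ob by blast+
  let ?XA = "pr X A"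
  have XA: "?XA \<in> Ob C" by (rule hi X A)+
  have e: "EpsW A X (gr f) \<in> hm A X" using acW[OF X ns A gr_in[OF f]] by blast
  let ?e = "pa (EpsW A X (gr f)) (ii A)"
  have eh: "?e \<in> hm A ?XA" by (rule hi e A)+
  have p2e: "cm (pi2 X A) ?e = ii A" by (rule pr2_pair[OF e id_hom[OF A]])
  have G: "gr f \<in> pd ?XA" by (rule gr_in[OF f])
  have c2: "re (pi2 X A) \<chi> \<in> pd ?XA" by (rule hi X A \<chi>)+
  have z2: "re (pi2 X A) \<zeta> \<in> pd ?XA" by (rule hi X A \<zeta>)+
  have fc: "re f \<chi> \<in> pd X" and fz: "re f \<zeta> \<in> pd X" by (rule re_in[OF f \<chi>] re_in[OF f \<zeta>])+
  have c1: "re (pi1 X A) (re f \<chi>) \<in> pd ?XA" and z1: "re (pi1 X A) (re f \<zeta>) \<in> pd ?XA" by (rule hi X A fc fz)+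
  have ee: "\<chi> = re ?e (re (pi2 X A) \<chi>)" using re_comp[OF eh pr2_hom[OF X A] \<chi>] p2e re_id[OF A \<chi>] by simp
  have "Meet A \<chi> (Im X A f) = re ?e (Meet ?XA (re (pi2 X A) \<chi>) (gr f))"
    unfolding Im_def using re_meet[OF eh c2 G] ee by simp
  also have "... = re ?e (Meet ?XA (gr f) (re (pi2 X A) \<chi>))" using meet_comm[OF XA c2 G] by simp
  finally have eq: "Meet A \<chi> (Im X A f) = re ?e (Meet ?XA (gr f) (re (pi2 X A) \<chi>))" .
  have M: "Meet ?XA (gr f) (re (pi2 X A) \<chi>) \<in> pd ?XA" by (rule meet_in[OF XA G c2])
  have M2: "Meet ?XA (gr f) (re (pi1 X A) (re f \<zeta>)) \<in> pd ?XA" by (rule meet_in[OF XA G z1])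
  have 1: "le ?XA (Meet ?XA (gr f) (re (pi2 X A) \<chi>)) (re (pi1 X A) (re f \<chi>))"
    using GR[OF f \<chi>] re_comp[OF pr1_hom[OF X A] f \<chi>] by simp
  have 2: "le ?XA (re (pi1 X A) (re f \<chi>)) (re (pi1 X A) (re f \<zeta>))" by (rule re_mono[OF pr1_hom[OF X A] fc fz H])
  have 3: "le ?XA (Meet ?XA (gr f) (re (pi2 X A) \<chi>)) (Meet ?XA (gr f) (re (pi1 X A) (re f \<zeta>)))"
    by (rule meet_glb[OF XA G z1 M meet_le1[OF XA G c2] le_trans[OF XA M c1 z1 1 2]])
  have 4: "le ?XA (Meet ?XA (gr f) (re (pi1 X A) (re f \<zeta>))) (re (pi2 X A) \<zeta>)"
    using GF[OF f \<zeta>] re_comp[OF pr1_hom[OF X A] f \<zeta>] by simp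
  have 5: "le A (re ?e (Meet ?XA (gr f) (re (pi2 X A) \<chi>))) (re ?e (re (pi2 X A) \<zeta>))"
    by (rule re_mono[OF eh M z2 le_trans[OF XA M M2 z2 3 4]])
  have "re ?e (re (pi2 X A) \<zeta>) = \<zeta>" using re_comp[OF eh pr2_hom[OF X A] \<zeta>] p2e re_id[OF A \<zeta>] by simp
  thus ?thesis using 5 eq by simp
qed

lemma Im_sec: assumes f: "f \<in> hm X A" and ns: "\<not> stable_initial C X" and s: "s \<in> hm A X"
  and fs: "cm f s = ii A" and \<psi>: "\<psi> \<in> pd A"
  shows "le A \<psi> (Im X A f)"
proof -
  have X: "X \<in> Ob C" and A: "A \<in> Ob C" using f dom_ob cod_ob by blast+
  let ?XA = "pr X A" and ?w = "pa s (ii A)"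
  have w: "?w \<in> hm A ?XA" by (rule hi s A)+
  have g: "pa (cm f (pi1 X A)) (pi2 X A) \<in> hm ?XA (pr A A)" by (rule hi X A f)+
  have I: "Im X A f \<in> pd A" by (rule Im_in[OF f ns])
  have 1: "le A (re ?w (gr f)) (re ?w (re (pi2 X A) (Im X A f)))"
    by (rule re_mono[OF w gr_in[OF f] _ Im_unit[OF f ns]]) (rule hi X A I)+
  have "re ?w (re (pi2 X A) (Im X A f)) = Im X A f"
    using re_comp[OF w pr2_hom[OF X A] I] pr2_pair[OF s id_hom[OF A]] re_id[OF A I] by simp
  moreover have "re ?w (gr f) = dl A"
  proof -
    have "cm (pa (cm f (pi1 X A)) (pi2 X A)) ?w = pa (cm (cm f (pi1 X A)) ?w) (cm (pi2 X A) ?w)"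
      by (rule pair_comp) (rule hi X A f s)+
    also have "... = pa (ii A) (ii A)"
      using assoc[OF w pr1_hom[OF X A] f] pr1_pair[OF s id_hom[OF A]] pr2_pair[OF s id_hom[OF A]] fs by simp
    finally show ?thesis unfolding gr_eq[OF f] dl_def using re_comp[OF w g delta_in[OF A]] by simp
  qed
  moreover have "le A \<psi> (dl A)" using top_le[OF id_hom[OF A] \<psi>] re_id[OF A dl_in[OF A]] by simp
  ultimately show ?thesis using 1 le_trans[OF A \<psi> dl_in[OF A] I] by simp
qed

lemma top_reindex: assumes h: "h \<in> hm E A" and T: "\<And>\<psi>. \<psi> \<in> pd A \<Longrightarrow> le A \<psi> t" and t: "t \<in> pd A"
  and \<chi>: "\<chi> \<in> pd E"
  shows "le E \<chi> (re h t)"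
proof -
  have E: "E \<in> Ob C" and A: "A \<in> Ob C" using h dom_ob cod_ob by blast+
  have "le E (re h (dl A)) (re h t)" by (rule re_mono[OF h dl_in[OF A] t T[OF dl_in[OF A]]])
  thus ?thesis using top_le[OF h \<chi>] le_trans[OF E \<chi> re_in[OF h dl_in[OF A]] re_in[OF h t]] by blast
qed


lemma si_ob: "stable_initial C Z \<Longrightarrow> Z \<in> Ob C"
  unfolding stable_initial_def initial_def by blast
lemma si_init: "stable_initial C Z \<Longrightarrow> A \<in> Ob C \<Longrightarrow> \<exists>!f. f \<in> hm Z A"
  unfolding stable_initial_def initial_def by blast
lemma si_iso: "stable_initial C Z \<Longrightarrow> X \<in> Ob C \<Longrightarrow> \<exists>i\<in>hm (pr X Z) Z. iso C i"
  unfolding stable_initial_def by blast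

definition triv where "triv Y \<longleftrightarrow> (\<exists>Z y. stable_initial C Z \<and> y \<in> hm Y Z)"

lemma triv_unique: assumes t: "triv Y" and u: "u \<in> hm Y W" and v: "v \<in> hm Y W" shows "u = v"
proof -
  obtain Z y where Z: "stable_initial C Z" and y: "y \<in> hm Y Z" using t unfolding triv_def by blast
  have Y: "Y \<in> Ob C" and W: "W \<in> Ob C" and Zo: "Z \<in> Ob C" using u dom_ob cod_ob si_ob[OF Z] by blast+
  obtain i where i: "i \<in> hm (pr Y Z) Z" and iso: "iso C i" using si_iso[OF Z Y] by blast
  obtain j where j: "j \<in> hm Z (pr Y Z)" and ji: "cm j i = ii (pr Y Z)"
  proof -
    obtain j where "j \<in> hm (Cd C i) (Dm C i)" "cm j i = ii (Dm C i)" using iso unfolding iso_def by blast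
    moreover have "Dm C i = pr Y Z" "Cd C i = Z" using homD[OF i] by simp_all
    ultimately show ?thesis using that by simp
  qed
  have YZ: "pr Y Z \<in> Ob C" by (rule hi Y Zo)+
  have up: "cm u (pi1 Y Z) \<in> hm (pr Y Z) W" and vp: "cm v (pi1 Y Z) \<in> hm (pr Y Z) W"
    by (rule comp_hom[OF pr1_hom[OF Y Zo] u], rule comp_hom[OF pr1_hom[OF Y Zo] v])
  have a: "cm (cm u (pi1 Y Z)) j \<in> hm Z W" and b: "cm (cm v (pi1 Y Z)) j \<in> hm Z W"
    by (rule comp_hom[OF j up], rule comp_hom[OF j vp])
  have ab: "cm (cm u (pi1 Y Z)) j = cm (cm v (pi1 Y Z)) j" proof -
    obtain f0 where "\<forall>g. g \<in> hm Z W \<longrightarrow> g = f0" using si_init[OF Z W] by (elim ex1E) blast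
    thus ?thesis using a b by metis
  qed
  have ea: "cm (cm (cm u (pi1 Y Z)) j) i = cm u (pi1 Y Z)"
    unfolding assoc[OF i j up, symmetric] ji id_r[OF up] ..
  have eb: "cm (cm (cm v (pi1 Y Z)) j) i = cm v (pi1 Y Z)"
    unfolding assoc[OF i j vp, symmetric] ji id_r[OF vp] ..
  have "cm u (pi1 Y Z) = cm (cm (cm u (pi1 Y Z)) j) i" by (rule ea[symmetric])
  also have "... = cm (cm (cm v (pi1 Y Z)) j) i" by (simp only: ab)
  also have "... = cm v (pi1 Y Z)" by (rule eb)
  finally have uv: "cm u (pi1 Y Z) = cm v (pi1 Y Z)" .
  have s: "pa (ii Y) y \<in> hm Y (pr Y Z)" by (rule hi Y y)+
  have "cm (cm u (pi1 Y Z)) (pa (ii Y) y) = u"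
    unfolding assoc[OF s pr1_hom[OF Y Zo] u, symmetric] pr1_pair[OF id_hom[OF Y] y] id_r[OF u] ..
  moreover have "cm (cm v (pi1 Y Z)) (pa (ii Y) y) = v"
    unfolding assoc[OF s pr1_hom[OF Y Zo] v, symmetric] pr1_pair[OF id_hom[OF Y] y] id_r[OF v] ..
  ultimately show ?thesis using uv by metis
qed

lemma triv_exists: assumes t: "triv Y" and W: "W \<in> Ob C" shows "\<exists>u. u \<in> hm Y W"
proof -
  obtain Z y where Z: "stable_initial C Z" and y: "y \<in> hm Y Z" using t unfolding triv_def by blast
  obtain j where "j \<in> hm Z W" using si_init[OF Z W] by blast
  thus ?thesis using y by blast
qed

lemma triv_pre: "triv Y \<Longrightarrow> g \<in> hm Y' Y \<Longrightarrow> triv Y'"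
  unfolding triv_def by blast

lemma stab_triv: "stable_initial C Z \<Longrightarrow> triv Z"
  unfolding triv_def using id_hom si_ob by blast

lemma triv_le: assumes t: "triv Y" and a: "a \<in> pd Y" and b: "b \<in> pd Y" shows "le Y a b"
proof -
  have Y: "Y \<in> Ob C" using t unfolding triv_def using dom_ob by blast
  have tb: "triv (CoObj Y b)" by (rule triv_pre[OF t co_hom[OF Y b]])
  obtain g where g: "g \<in> hm (CoObj Y b) (CoObj Y a)" using triv_exists[OF tb co_ob[OF Y a]] by blast
  have "cm (CoArr Y a) g = CoArr Y b"
    by (rule triv_unique[OF tb]) (rule hi g Y a b)+
  thus ?thesis by (rule co_full[OF Y a b g])
qed

lemma triv_pd: "triv Y \<Longrightarrow> a \<in> pd Y \<Longrightarrow> b \<in> pd Y \<Longrightarrow> a = b"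
  using triv_le le_antisym triv_def dom_ob by metis

lemma eaco_cond: assumes f: "f \<in> hm X A" and a: "a \<in> pd A"
  and n1: "\<not> stable_initial C (CoObj A a)" and n2: "\<not> stable_initial C (CoObj X (re f a))"
  shows "re f (Im (CoObj A a) A (CoArr A a)) = Im (CoObj X (re f a)) X (CoArr X (re f a))"
  using EA[unfolded eaco_def, THEN conjunct2, THEN conjunct2, THEN conjunct2, rule_format, OF f a n1 n2]
  unfolding Im_def Let_def .

lemma bot_pres_ns: assumes h: "h \<in> hm E B" and ns: "\<not> stable_initial C (CoObj E (re h (Bot B)))"
  shows "re h (Bot B) = Bot E"
proof -
  have E: "E \<in> Ob C" and B: "B \<in> Ob C" using h dom_ob cod_ob by blast+
  let ?\<beta> = "re h (Bot B)"
  have \<beta>: "?\<beta> \<in> pd E" by (rule re_in[OF h bot_in[OF B]])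
  let ?cz = "CoArr B (Bot B)" and ?Oz = "CoObj B (Bot B)"
  obtain s where s: "s \<in> hm B ?Oz" and cs: "cm ?cz s = ii B"
    using co_univ[OF B bot_in[OF B] id_hom[OF B] re_id[OF B bot_in[OF B]]] by blast
  show ?thesis
  proof (cases "stable_initial C ?Oz")
    case True
    have "triv E" by (rule triv_pre[OF triv_pre[OF stab_triv[OF True] s] h])
    thus ?thesis using triv_pd \<beta> bot_in[OF E] by blast
  next
    case False
    let ?c = "CoArr E ?\<beta>" and ?O = "CoObj E ?\<beta>"
    have c0: "?cz \<in> hm ?Oz B" by (rule co_hom[OF B bot_in[OF B]])
    have c: "?c \<in> hm ?O E" by (rule co_hom[OF E \<beta>])
    have I0: "Im ?Oz B ?cz \<in> pd B" by (rule Im_in[OF c0 False])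
    have top0: "\<And>\<psi>. \<psi> \<in> pd B \<Longrightarrow> le B \<psi> (Im ?Oz B ?cz)" by (rule Im_sec[OF c0 False s cs])
    have eq: "re h (Im ?Oz B ?cz) = Im ?O E ?c" by (rule eaco_cond[OF h bot_in[OF B] False ns])
    have top: "le E ?\<beta> (Im ?O E ?c)" using top_reindex[OF h top0 I0 \<beta>] eq by simp
    have I: "Im ?O E ?c \<in> pd E" by (rule Im_in[OF c ns])
    have 1: "le E ?\<beta> (Meet E ?\<beta> (Im ?O E ?c))" by (rule meet_glb[OF E \<beta> I \<beta> le_refl[OF E \<beta>] top])
    have 2: "le E (Meet E ?\<beta> (Im ?O E ?c)) (Bot E)"
    proof (rule ImBC[OF c ns \<beta> bot_in[OF E]])
      show "le ?O (re ?c ?\<beta>) (re ?c (Bot E))" using co_bot[OF E \<beta>] bot_le[OF co_ob[OF E \<beta>]] re_in[OF c bot_in[OF E]] by simp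
    qed
    have "le E ?\<beta> (Bot E)" by (rule le_trans[OF E \<beta> meet_in[OF E \<beta> I] bot_in[OF E] 1 2])
    thus ?thesis using le_antisym[OF E \<beta> bot_in[OF E]] bot_le[OF E \<beta>] by blast
  qed
qed

lemma bot_pres_pr1: assumes B: "B \<in> Ob C" and E: "E \<in> Ob C"
  shows "re (pi1 B E) (Bot B) = Bot (pr B E)"
proof -
  let ?BE = "pr B E" and ?\<beta> = "re (pi1 B E) (Bot B)"
  have BE: "?BE \<in> Ob C" by (rule hi B E)+
  have \<beta>: "?\<beta> \<in> pd ?BE" by (rule hi B E)+
  show ?thesis
  proof (cases "stable_initial C (CoObj ?BE ?\<beta>)")
    case False thus ?thesis by (rule bot_pres_ns[OF pr1_hom[OF B E]])
  next
    case T: True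
    have "triv ?BE"
    proof (cases "stable_initial C E")
      case True thus ?thesis using triv_pre[OF stab_triv[OF True] pr2_hom[OF B E]] by blast
    next
      case False
      have e: "EpsC B E (Bot ?BE) \<in> hm B E" by (rule acC[OF E False B bot_in[OF BE]])
      let ?s = "pa (ii B) (EpsC B E (Bot ?BE))"
      have s: "?s \<in> hm B ?BE" by (rule hi B e)+
      have "re ?s ?\<beta> = Bot B"
        using re_comp[OF s pr1_hom[OF B E] bot_in[OF B]] pr1_pair[OF id_hom[OF B] e] re_id[OF B bot_in[OF B]] by simp
      then obtain g where g: "g \<in> hm B (CoObj ?BE ?\<beta>)" using co_univ[OF BE \<beta> s] by blast
      show ?thesis by (rule triv_pre[OF triv_pre[OF stab_triv[OF T] g] pr1_hom[OF B E]])
    qed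
    thus ?thesis using triv_pd \<beta> bot_in[OF BE] by blast
  qed
qed

lemma bot_pres: assumes h: "h \<in> hm E B" shows "re h (Bot B) = Bot E"
proof -
  have E: "E \<in> Ob C" and B: "B \<in> Ob C" using h dom_ob cod_ob by blast+
  let ?w = "pa h (ii E)"
  have w: "?w \<in> hm E (pr B E)" by (rule hi h E)+
  have "re h (Bot B) = re ?w (re (pi1 B E) (Bot B))"
    using re_comp[OF w pr1_hom[OF B E] bot_in[OF B]] pr1_pair[OF h id_hom[OF E]] by simp
  also have "... = re ?w (Bot (pr B E))" using bot_pres_pr1[OF B E] by simp
  finally have e: "re h (Bot B) = re ?w (Bot (pr B E))" .
  have "le E (re ?w (Bot (pr B E))) (re ?w (re (pi2 B E) (Bot E)))"
    by (rule re_mono[OF w]) (rule hi B E bot_le)+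
  also have "re ?w (re (pi2 B E) (Bot E)) = Bot E"
    using re_comp[OF w pr2_hom[OF B E] bot_in[OF E]] pr2_pair[OF h id_hom[OF E]] re_id[OF E bot_in[OF E]] by simp
  finally have "le E (re h (Bot B)) (Bot E)" using e by simp
  thus ?thesis using le_antisym[OF E re_in[OF h bot_in[OF B]] bot_in[OF E]] bot_le[OF E re_in[OF h bot_in[OF B]]] by blast
qed


lemma pb_unpack: assumes pb: "pullback C h g f k" and h: "h \<in> hm E B" and g: "g \<in> hm F E"
  and k: "k \<in> hm F Q" and f: "f \<in> hm Q B"
  shows "cm h g = cm f k"
    and "\<And>Z u v. u \<in> hm Z E \<Longrightarrow> v \<in> hm Z Q \<Longrightarrow> cm h u = cm f v \<Longrightarrow> \<exists>w. w \<in> hm Z F \<and> cm g w = u \<and> cm k w = v"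
proof -
  obtain A' B' E' F' where f': "f \<in> hm A' B'" and h': "h \<in> hm E' B'" and g': "g \<in> hm F' E'" and k': "k \<in> hm F' A'"
    and c: "cm h g = cm f k"
    and U: "\<forall>Z u v. u \<in> hm Z E' \<longrightarrow> v \<in> hm Z A' \<longrightarrow> cm h u = cm f v \<longrightarrow>
           (\<exists>!w. w \<in> hm Z F' \<and> cm g w = u \<and> cm k w = v)"
    using pb unfolding pullback_def by blast
  have "A' = Q" "E' = E" "F' = F" using homD[OF f] homD[OF f'] homD[OF h] homD[OF h'] homD[OF g] homD[OF g'] by auto
  thus "cm h g = cm f k" using c by simp
  fix Z u v assume "u \<in> hm Z E" "v \<in> hm Z Q" "cm h u = cm f v"
  thus "\<exists>w. w \<in> hm Z F \<and> cm g w = u \<and> cm k w = v" using U \<open>A' = Q\<close> \<open>E' = E\<close> \<open>F' = F\<close> by blast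
qed

lemma main_fix: assumes B: "B \<in> Ob C" and a: "a \<in> pd B"
  shows "\<exists>S. (\<forall>\<phi>\<in>pd (CoObj B a). S \<phi> \<in> pd B \<and>
               (\<forall>\<xi>\<in>pd B. le B (S \<phi>) \<xi> \<longleftrightarrow> le (CoObj B a) \<phi> (re (CoArr B a) \<xi>))) \<and>
            (\<forall>h g k E F. h \<in> hm E B \<longrightarrow> g \<in> hm F E \<longrightarrow> k \<in> hm F (CoObj B a) \<longrightarrow>
               pullback C h g (CoArr B a) k \<longrightarrow>
               (\<forall>\<xi>\<in>pd B. \<forall>\<zeta>\<in>pd E.
                  le E (re h (S (re (CoArr B a) \<xi>))) \<zeta> \<longleftrightarrow> le F (re k (re (CoArr B a) \<xi>)) (re g \<zeta>)))"
proof -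
  let ?O = "CoObj B a" and ?f = "CoArr B a"
  have O: "?O \<in> Ob C" by (rule co_ob[OF B a])
  have f: "?f \<in> hm ?O B" by (rule co_hom[OF B a])
  show ?thesis
  proof (cases "stable_initial C ?O")
    case True
    have tO: "triv ?O" by (rule stab_triv[OF True])
    show ?thesis
    proof (rule exI[of _ "\<lambda>\<phi>. Bot B"], intro conjI ballI allI impI)
      fix \<phi> assume \<phi>: "\<phi> \<in> pd ?O"
      show "Bot B \<in> pd B" by (rule bot_in[OF B])
      fix \<xi> assume \<xi>: "\<xi> \<in> pd B"
      show "le B (Bot B) \<xi> \<longleftrightarrow> le ?O \<phi> (re ?f \<xi>)"
        using bot_le[OF B \<xi>] triv_le[OF tO \<phi> re_in[OF f \<xi>]] by blast
    next
      fix h g k E F \<xi> \<zeta> assume h: "h \<in> hm E B" and g: "g \<in> hm F E" and k: "k \<in> hm F ?O"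
        and \<xi>: "\<xi> \<in> pd B" and \<zeta>: "\<zeta> \<in> pd E"
      have E: "E \<in> Ob C" using h dom_ob by blast
      have tF: "triv F" by (rule triv_pre[OF tO k])
      show "le E (re h (Bot B)) \<zeta> \<longleftrightarrow> le F (re k (re ?f \<xi>)) (re g \<zeta>)"
        using bot_pres[OF h] bot_le[OF E \<zeta>] triv_le[OF tF re_in[OF k re_in[OF f \<xi>]] re_in[OF g \<zeta>]] by simp
    qed
  next
    case ns: False
    show ?thesis
    proof (rule exI[of _ "SS ?O B ?f"], intro conjI ballI allI impI)
      fix \<phi> assume \<phi>: "\<phi> \<in> pd ?O"
      show "SS ?O B ?f \<phi> \<in> pd B" by (rule SS_in[OF f ns \<phi>])
      fix \<xi> assume \<xi>: "\<xi> \<in> pd B"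
      show "le B (SS ?O B ?f \<phi>) \<xi> \<longleftrightarrow> le ?O \<phi> (re ?f \<xi>)" by (rule SS_adj[OF f ns \<phi> \<xi>])
    next
      fix h g k E F \<xi> \<zeta> assume h: "h \<in> hm E B" and g: "g \<in> hm F E" and k: "k \<in> hm F ?O"
        and pb: "pullback C h g ?f k" and \<xi>: "\<xi> \<in> pd B" and \<zeta>: "\<zeta> \<in> pd E"
      have E: "E \<in> Ob C" and F: "F \<in> Ob C" using h g dom_ob by blast+
      note PB = pb_unpack[OF pb h g k f]
      let ?\<sigma> = "SS ?O B ?f (re ?f \<xi>)"
      have f\<xi>: "re ?f \<xi> \<in> pd ?O" by (rule re_in[OF f \<xi>])
      have \<sigma>: "?\<sigma> \<in> pd B" by (rule SS_in[OF f ns f\<xi>])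
      have h\<sigma>: "re h ?\<sigma> \<in> pd E" by (rule re_in[OF h \<sigma>])
      show "le E (re h ?\<sigma>) \<zeta> \<longleftrightarrow> le F (re k (re ?f \<xi>)) (re g \<zeta>)"
      proof
        assume H: "le E (re h ?\<sigma>) \<zeta>"
        have 1: "le F (re k (re ?f \<xi>)) (re k (re ?f ?\<sigma>))"
          by (rule re_mono[OF k f\<xi> re_in[OF f \<sigma>] SS_unit[OF f ns f\<xi>]])
        have "re k (re ?f ?\<sigma>) = re g (re h ?\<sigma>)"
          using re_comp[OF k f \<sigma>] re_comp[OF g h \<sigma>] PB(1) by simp
        moreover have "le F (re g (re h ?\<sigma>)) (re g \<zeta>)" by (rule re_mono[OF g h\<sigma> \<zeta> H])
        ultimately show "le F (re k (re ?f \<xi>)) (re g \<zeta>)"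
          using le_trans[OF F re_in[OF k f\<xi>] re_in[OF g h\<sigma>] re_in[OF g \<zeta>]] 1 by simp
      next
        assume H: "le F (re k (re ?f \<xi>)) (re g \<zeta>)"
        let ?a' = "re h a"
        have a': "?a' \<in> pd E" by (rule re_in[OF h a])
        let ?c = "CoArr E ?a'" and ?O' = "CoObj E ?a'"
        have O': "?O' \<in> Ob C" by (rule co_ob[OF E a'])
        have c: "?c \<in> hm ?O' E" by (rule co_hom[OF E a'])
        have hc: "cm h ?c \<in> hm ?O' B" by (rule comp_hom[OF c h])
        have "re (cm h ?c) a = Bot ?O'" using re_comp[OF c h a] co_bot[OF E a'] by simp
        then obtain v where v: "v \<in> hm ?O' ?O" and fv: "cm ?f v = cm h ?c"
          using co_univ[OF B a hc] by blast
        obtain w where w: "w \<in> hm ?O' F" and gw: "cm g w = ?c" and kw: "cm k w = v"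
          using PB(2)[OF c v fv[symmetric]] by blast
        have I: "Im ?O B ?f \<in> pd B" by (rule Im_in[OF f ns])
        have hI: "re h (Im ?O B ?f) \<in> pd E" by (rule re_in[OF h I])
        have CLE: "le ?O' (re ?c (re h \<xi>)) (re ?c \<zeta>)"
        proof -
          have "re ?c (re h \<xi>) = re (cm h ?c) \<xi>" using re_comp[OF c h \<xi>] by simp
          also have "... = re (cm ?f (cm k w)) \<xi>" using fv kw by simp
          also have "... = re w (re k (re ?f \<xi>))" using re_comp[OF comp_hom[OF w k] f \<xi>] re_comp[OF w k f\<xi>] by simp
          finally have e1: "re ?c (re h \<xi>) = re w (re k (re ?f \<xi>))" .
          have e2: "re ?c \<zeta> = re w (re g \<zeta>)" using re_comp[OF w g \<zeta>] gw by simp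
          show ?thesis unfolding e1 e2 by (rule re_mono[OF w re_in[OF k f\<xi>] re_in[OF g \<zeta>] H])
        qed
        have \<sigma>I: "le B ?\<sigma> (Im ?O B ?f)" by (rule SS_le_Im[OF f ns f\<xi>])
        have \<sigma>\<xi>: "le B ?\<sigma> \<xi>" by (rule SS_counit[OF f ns \<xi>])
        have \<sigma>M: "le B ?\<sigma> (Meet B \<xi> (Im ?O B ?f))" by (rule meet_glb[OF B \<xi> I \<sigma> \<sigma>\<xi> \<sigma>I])
        have h\<sigma>M: "le E (re h ?\<sigma>) (re h (Meet B \<xi> (Im ?O B ?f)))"
          by (rule re_mono[OF h \<sigma> meet_in[OF B \<xi> I] \<sigma>M])
        have hM: "re h (Meet B \<xi> (Im ?O B ?f)) = Meet E (re h \<xi>) (re h (Im ?O B ?f))"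
          by (rule re_meet[OF h \<xi> I])
        have h\<xi>: "re h \<xi> \<in> pd E" by (rule re_in[OF h \<xi>])
        show "le E (re h ?\<sigma>) \<zeta>"
        proof (cases "stable_initial C ?O'")
          case st: True
          have tO': "triv ?O'" by (rule stab_triv[OF st])
          have top: "le E (re h ?\<sigma>) ?a'"
          proof -
            have \<chi>: "re h ?\<sigma> \<in> pd E" by (rule h\<sigma>)
            obtain g0 where g0: "g0 \<in> hm ?O' (CoObj E (re h ?\<sigma>))" using triv_exists[OF tO' co_ob[OF E \<chi>]] by blast
            have "cm (CoArr E (re h ?\<sigma>)) g0 = ?c"
              by (rule triv_unique[OF tO' comp_hom[OF g0 co_hom[OF E \<chi>]] c])
            thus ?thesis by (rule co_full[OF E \<chi> a' g0])
          qed
          have 1: "le E (re h ?\<sigma>) (re h (Im ?O B ?f))" by (rule re_mono[OF h \<sigma> I \<sigma>I])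
          have 2: "le E (re h ?\<sigma>) (Meet E ?a' (re h (Im ?O B ?f)))" by (rule meet_glb[OF E a' hI h\<sigma> top 1])
          have 3: "le B (Meet B a (Im ?O B ?f)) (Bot B)"
          proof (rule ImBC[OF f ns a bot_in[OF B]])
            show "le ?O (re ?f a) (re ?f (Bot B))"
              using co_bot[OF B a] bot_le[OF O re_in[OF f bot_in[OF B]]] by simp
          qed
          have 4: "le E (re h (Meet B a (Im ?O B ?f))) (re h (Bot B))"
            by (rule re_mono[OF h meet_in[OF B a I] bot_in[OF B] 3])
          have 5: "le E (re h ?\<sigma>) (Bot E)"
            using le_trans[OF E h\<sigma> meet_in[OF E a' hI] re_in[OF h bot_in[OF B]] 2] 4 re_meet[OF h a I] bot_pres[OF h]
            by simp
          show ?thesis by (rule le_trans[OF E h\<sigma> bot_in[OF E] \<zeta> 5 bot_le[OF E \<zeta>]])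
        next
          case ns': False
          have eq: "re h (Im ?O B ?f) = Im ?O' E ?c" by (rule eaco_cond[OF h a ns ns'])
          have 6: "le E (Meet E (re h \<xi>) (Im ?O' E ?c)) \<zeta>" by (rule ImBC[OF c ns' h\<xi> \<zeta> CLE])
          have "le E (re h ?\<sigma>) (Meet E (re h \<xi>) (Im ?O' E ?c))" using h\<sigma>M hM eq by simp
          thus ?thesis using le_trans[OF E h\<sigma> meet_in[OF E h\<xi> Im_in[OF c ns']] \<zeta> _ 6] by blast
        qed
      qed
    qed
  qed
qed

lemma main: "restricted_Sigma_doctrine C D (coco_class C D CoArr)"
  unfolding restricted_Sigma_doctrine_def
proof (intro conjI ballI allI impI)
  show "doctrine C D" by (rule doc)
next
  fix f A B assume fc: "f \<in> coco_class C D CoArr" and fh: "f \<in> hm A B"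
  obtain B0 a where B0: "B0 \<in> Ob C" and a: "a \<in> pd B0" and fe: "f = CoArr B0 a"
    using fc unfolding coco_class_def by blast
  have "A = CoObj B0 a" "B = B0" using homD[OF fh] homD[OF co_hom[OF B0 a]] fe by auto
  thus "\<exists>S. (\<forall>\<phi>\<in>pd A. S \<phi> \<in> pd B \<and> (\<forall>\<xi>\<in>pd B. le B (S \<phi>) \<xi> \<longleftrightarrow> le A \<phi> (re f \<xi>))) \<and>
            (\<forall>h g k E F. h \<in> hm E B \<longrightarrow> g \<in> hm F E \<longrightarrow> k \<in> hm F A \<longrightarrow>
               pullback C h g f k \<longrightarrow>
               (\<forall>\<xi>\<in>pd B. \<forall>\<zeta>\<in>pd E.
                  le E (re h (S (re f \<xi>))) \<zeta> \<longleftrightarrow> le F (re k (re f \<xi>)) (re g \<zeta>)))"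
    using main_fix[OF B0 a] fe by simp
qed

end

theorem mainTheorem12:
  fixes C :: "('o,'m) cat" and D :: "('o,'m,'p) doct"
  assumes "eaco C D Meet Delta EpsC EpsW Bot CoObj CoArr"
  shows "restricted_Sigma_doctrine C D (coco_class C D CoArr)"
proof -
  interpret EL C D Meet Delta EpsC EpsW Bot CoObj CoArr by (rule EL.intro[OF assms])
  show ?thesis by (rule main)
qed

end
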